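(* In the kernel SGD setting below, assume the capacity condition with exponent $\beta>1$, the source condition with exponent $s>0$, and hypercontractivity with constant $C$. Run one-pass SGD for $N$ steps with $\eta_k=\eta_0(1-k/N)^\gamma$, $k=0,\dots,N-1$. Let $c_0$ be a constant with $0<c_0\le\lambda_1^{-1}$ and $c_0<(2C\,\mathrm{tr}(\mathcal T))^{-1}$. Then: (i) If $s\ge1-1/\beta$, $\gamma>\beta-1$ and $\eta_0=c_0N^{-\frac{s\beta-\beta+1}{s\beta+1}}$, then $\mathbb E[\mathcal E(\theta_N)]\lesssim N^{-\frac{s\beta}{s\beta+1}}$. (ii) If $s<1-1/\beta$, $\gamma>\frac{s}{1-s}$ and $\eta_0=c_0$, then $\mathbb E[\mathcal E(\theta_N)]\lesssim N^{-s}$. Implicit constants do not depend on $N$.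
   Context: Kernel SGD setting. $\mathcal X$ is an input space, $\mathcal D$ a distribution on $\mathcal X\times\mathbb R$ with marginal $\mathcal D_{\mathcal X}$; $\mathbb H$ is a separable Hilbert space and $\phi:\mathcal X\to\mathbb H$ a feature map with kernel $K(x,x')=\langle\phi(x),\phi(x')\rangle$ and $\mathbb E[K(x,x)]<\infty$. The covariance operator $\mathcal T=\mathbb E[\phi(x)\otimes\phi(x)]$ has eigenvalues $\lambda_1\ge\lambda_2\ge\dots\ge0$ with orthonormal eigenvectors $v_j\in\mathbb H$; $\mathrm{tr}(\mathcal T)=\sum_j\lambda_j$; $e_j(x)=\lambda_j^{-1/2}\langle v_j,\phi(x)\rangle$ (orthonormal in $L^2(\mathcal D_{\mathcal X})$). Labels: $y=f^*(x)+\epsilon$, $\epsilon\sim\mathcal N(0,\sigma^2)$ independent of $x$, with $f^*$ in the $L^2$-closure of $\mathrm{span}\{e_j\}$. Capacity condition: $\lambda_j\le c\,j^{-\beta}$ for all $j$. Source condition: $f^*=\sum_j a_j\lambda_j^{s/2}e_j$ with $\sum_ja_j^2\le1$; set $\theta^*_j=a_j\lambda_j^{(s-1)/2}$. Hypercontractivity: $\mathbb E[\langle u,\phi(x)\rangle^2\langle v,\phi(x)\rangle^2]\le C\,\mathbb E[\langle u,\phi(x)\rangle^2]\mathbb E[\langle v,\phi(x)\rangle^2]$ for all $u,v\in\mathbb H$. One-pass SGD: i.i.d. samples $(x_k,y_k)\sim\mathcal D$, $\theta_0=0$, $\theta_{k+1}=\theta_k-\eta_k(\langle\theta_k,\phi(x_k)\rangle-y_k)\phi(x_k)$.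 Excess risk: $\mathcal E(\theta)=\frac12\mathbb E_x[(\langle\theta,\phi(x)\rangle-f^*(x))^2]=\frac12\sum_j\lambda_j(\langle\theta,v_j\rangle-\theta_j^* )^2$. *)

theory Defs
  imports "HOL-Probability.Probability"
begin

fun sgd_iter :: "(nat \<Rightarrow> real) \<Rightarrow> ('x \<Rightarrow> 'h::real_inner) \<Rightarrow> (nat \<Rightarrow> 'x \<times> real) \<Rightarrow> nat \<Rightarrow> 'h" where
  "sgd_iter eta phi z 0 = 0"
| "sgd_iter eta phi z (Suc k) =
     (let th = sgd_iter eta phi z k in
        th - (eta k * (inner th (phi (fst (z k))) - snd (z k))) *\<^sub>R phi (fst (z k)))"

definition excess_risk :: "'x measure \<Rightarrow> ('x \<Rightarrow> 'h::real_inner) \<Rightarrow> ('x \<Rightarrow> real) \<Rightarrow> 'h \<Rightarrow> ennreal" where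
  "excess_risk mu phi f th = (\<integral>\<^sup>+ x. ennreal ((inner th (phi x) - f x)\<^sup>2 / 2) \<partial>mu)"

definition data_dist :: "'x measure \<Rightarrow> ('x \<Rightarrow> real) \<Rightarrow> real \<Rightarrow> ('x \<times> real) measure" where
  "data_dist mu f sig =
     distr (mu \<Otimes>\<^sub>M density lborel (normal_density 0 sig)) (mu \<Otimes>\<^sub>M borel)
           (\<lambda>(x, e). (x, f x + e))"

definition expected_risk ::
  "'x measure \<Rightarrow> ('x \<Rightarrow> 'h::real_inner) \<Rightarrow> ('x \<Rightarrow> real) \<Rightarrow> real \<Rightarrow> (nat \<Rightarrow> real) \<Rightarrow> nat \<Rightarrow> ennreal" where
  "expected_risk mu phi f sig eta N =
     (\<integral>\<^sup>+ z. excess_risk mu phi f (sgd_iter eta phi z N) \<partial>(PiM {..<N} (\<lambda>_. data_dist mu f sig)))"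

definition eigfun :: "(nat \<Rightarrow> real) \<Rightarrow> (nat \<Rightarrow> 'h::real_inner) \<Rightarrow> ('x \<Rightarrow> 'h) \<Rightarrow> nat \<Rightarrow> 'x \<Rightarrow> real" where
  "eigfun lam v phi j x = lam j powr (-1/2) * inner (v j) (phi x)"

end

theory Submission
  imports Defs
begin

locale sgdloc =
  fixes mu :: "'x measure"
    and phi :: "'x \<Rightarrow> 'h::{real_inner, complete_space, second_countable_topology}"
    and lam :: "nat \<Rightarrow> real" and v :: "nat \<Rightarrow> 'h"
    and f :: "'x \<Rightarrow> real" and a :: "nat \<Rightarrow> real"
    and sig s C :: real
  assumes prob: "prob_space mu"
    and phi_meas: "phi \<in> borel_measurable mu"
    and kernel_int: "integrable mu (\<lambda>x. (norm (phi x))\<^sup>2)"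
    and lam_nonneg: "\<And>j. lam j \<ge> 0"
    and lam_le0: "\<And>j. lam j \<le> lam 0"
    and v_orth: "\<And>i j. inner (v i) (v j) = (if i = j then 1 else 0)"
    and v_eig: "\<And>j u. (\<integral>x. inner (v j) (phi x) * inner u (phi x) \<partial>mu) = lam j * inner (v j) u"
    and spectral: "\<And>u. (\<lambda>j. lam j * (inner u (v j))\<^sup>2) sums (\<integral>x. (inner u (phi x))\<^sup>2 \<partial>mu)"
    and sigma_pos: "sig > 0"
    and f_meas: "f \<in> borel_measurable mu"
    and s_pos: "s > 0"
    and a_summ: "summable (\<lambda>j. (a j)\<^sup>2)"
    and source: "(\<lambda>n. \<integral>\<^sup>+ x. ennreal ((f x - (\<Sum>j<n. a j * lam j powr (s/2) * eigfun lam v phi j x))\<^sup>2) \<partial>mu)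
                   \<longlonglongrightarrow> 0"
    and hypercontr: "\<And>u w. (\<integral>\<^sup>+ x. ennreal ((inner u (phi x))\<^sup>2 * (inner w (phi x))\<^sup>2) \<partial>mu)
                      \<le> ennreal C * (\<integral>\<^sup>+ x. ennreal ((inner u (phi x))\<^sup>2) \<partial>mu)
                                    * (\<integral>\<^sup>+ x. ennreal ((inner w (phi x))\<^sup>2) \<partial>mu)"
begin

definition tt :: "nat \<Rightarrow> real" where
  "tt j = a j * lam j powr (s/2) * lam j powr (-1/2)"

definition uu :: "nat \<Rightarrow> 'h" where
  "uu n = (\<Sum>i<n. tt i *\<^sub>R v i)"

lemma fn_eq: "(\<Sum>j<n. a j * lam j powr (s/2) * eigfun lam v phi j x) = inner (uu n) (phi x)"
  unfolding uu_def eigfun_def tt_def by (simp add: inner_sum_left algebra_simps)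

lemma inner_uu_v: "inner (uu n) (v i) = (if i < n then tt i else 0)"
  unfolding uu_def by (simp add: inner_sum_left v_orth if_distrib cong: if_cong)

lemma lam_tt_sq: "lam j * (tt j)\<^sup>2 = (a j)\<^sup>2 * lam j powr s"
proof (cases "lam j = 0")
  case True then show ?thesis by (simp add: tt_def)
next
  case False
  then have p: "lam j > 0" using lam_nonneg[of j] by simp
  have "lam j * (tt j)\<^sup>2 = (a j)\<^sup>2 * (lam j * (lam j powr (s/2))\<^sup>2 * (lam j powr (-1/2))\<^sup>2)"
    by (simp add: tt_def power_mult_distrib)
  also have "(lam j powr (s/2))\<^sup>2 = lam j powr s" using p
    by (simp add: powr_powr[symmetric] powr_realpow[symmetric] power2_eq_square powr_add[symmetric])
  also have "(lam j powr (-1/2))\<^sup>2 = lam j powr (-1)" using p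
    by (simp add: power2_eq_square powr_add[symmetric])
  also have "lam j * lam j powr s * lam j powr (-1) = lam j powr s" using p
    by (simp add: powr_minus field_simps)
  finally show ?thesis by simp
qed

lemma B_summable: "summable (\<lambda>j. lam j * (tt j)\<^sup>2)"
proof -
  have "summable (\<lambda>j. (a j)\<^sup>2 * lam 0 powr s)" using a_summ by (rule summable_mult2)
  then show ?thesis
    apply (rule summable_comparison_test[rotated])
    using lam_nonneg lam_le0 s_pos
    by (auto simp: lam_tt_sq intro!: mult_left_mono powr_mono2 exI[of _ 0])
qed

lemma integrable_sq: "integrable mu (\<lambda>x. (inner u (phi x))\<^sup>2)"
proof -
  have "integrable mu (\<lambda>x. (norm u)\<^sup>2 * (norm (phi x))\<^sup>2)" using kernel_int by simp
  then show ?thesis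
  proof (rule Bochner_Integration.integrable_bound)
    show "(\<lambda>x. (inner u (phi x))\<^sup>2) \<in> borel_measurable mu" using phi_meas by measurable
    show "AE x in mu. norm ((inner u (phi x))\<^sup>2) \<le> norm ((norm u)\<^sup>2 * (norm (phi x))\<^sup>2)"
    proof (rule AE_I2)
      fix x
      have "\<bar>inner u (phi x)\<bar> \<le> \<bar>norm u * norm (phi x)\<bar>"
        using Cauchy_Schwarz_ineq2[of u "phi x"] by simp
      then show "norm ((inner u (phi x))\<^sup>2) \<le> norm ((norm u)\<^sup>2 * (norm (phi x))\<^sup>2)"
        by (metis abs_le_square_iff abs_mult abs_norm_cancel power_mult_distrib real_norm_def abs_power2)
    qed
  qed
qed

lemma spec_summable: "summable (\<lambda>i. lam i * (inner u (v i))\<^sup>2)"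
  using spectral[of u] by (rule sums_summable)

lemma nn_sq: "(\<integral>\<^sup>+ x. ennreal ((inner u (phi x))\<^sup>2) \<partial>mu) = ennreal (\<Sum>i. lam i * (inner u (v i))\<^sup>2)"
  using integrable_sq[of u] spectral[of u]
  by (auto simp: nn_integral_eq_integral dest: sums_unique)

definition Sr :: "'h \<Rightarrow> real" where
  "Sr th = (\<Sum>i. lam i * (inner th (v i) - tt i)\<^sup>2)"

lemma Sr_summable: "summable (\<lambda>i. lam i * (inner th (v i) - tt i)\<^sup>2)"
proof -
  have "summable (\<lambda>i. 2 * (lam i * (inner th (v i))\<^sup>2) + 2 * (lam i * (tt i)\<^sup>2))"
    using spec_summable[of th] B_summable by (intro summable_add summable_mult)
  then show ?thesis
  proof (rule summable_comparison_test[rotated], intro exI[of _ 0] allI impI)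
    fix i :: nat
    have "(inner th (v i) - tt i)\<^sup>2 \<le> 2 * (inner th (v i))\<^sup>2 + 2 * (tt i)\<^sup>2"
      using zero_le_power2[of "inner th (v i) + tt i"] by (simp add: power2_eq_square algebra_simps)
    from mult_left_mono[OF this lam_nonneg[of i]]
    show "norm (lam i * (inner th (v i) - tt i)\<^sup>2) \<le> 2 * (lam i * (inner th (v i))\<^sup>2) + 2 * (lam i * (tt i)\<^sup>2)"
      using lam_nonneg[of i] by (simp add: algebra_simps)
  qed
qed

lemma Sr_nonneg: "Sr th \<ge> 0"
  unfolding Sr_def using lam_nonneg by (intro suminf_nonneg Sr_summable) simp

lemma inner_diff_uu: "inner (th - uu n) (v i) = inner th (v i) - (if i < n then tt i else 0)"
  by (simp add: inner_diff_left inner_uu_v)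

lemma Sn_lim: "(\<lambda>n. \<Sum>i. lam i * (inner (th - uu n) (v i))\<^sup>2) \<longlonglongrightarrow> Sr th"
proof -
  define A where "A i = lam i * (inner th (v i) - tt i)\<^sup>2" for i
  define E where "E i = lam i * (inner th (v i))\<^sup>2" for i
  have sA: "summable A" unfolding A_def by (rule Sr_summable)
  have sE: "summable E" unfolding E_def by (rule spec_summable)
  have eq: "(\<Sum>i. lam i * (inner (th - uu n) (v i))\<^sup>2) = suminf E + (\<Sum>i<n. A i - E i)" for n
  proof -
    have "(\<lambda>i. lam i * (inner (th - uu n) (v i))\<^sup>2) = (\<lambda>i. E i + (if i < n then A i - E i else 0))"
      by (auto simp: inner_diff_uu A_def E_def)
    moreover have "summable (\<lambda>i. (if i < n then A i - E i else 0))"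
      by (rule summable_finite[of "{..<n}"]) auto
    moreover have "(\<Sum>i. (if i < n then A i - E i else 0)) = (\<Sum>i<n. A i - E i)"
      by (subst suminf_finite[of "{..<n}"]) auto
    ultimately show ?thesis using sE by (simp add: suminf_add[symmetric])
  qed
  have "(\<lambda>n. \<Sum>i<n. A i - E i) \<longlonglongrightarrow> suminf A - suminf E"
    using summable_LIMSEQ[OF summable_diff[OF sA sE]] suminf_diff[OF sA sE] by simp
  then have "(\<lambda>n. suminf E + (\<Sum>i<n. A i - E i)) \<longlonglongrightarrow> suminf E + (suminf A - suminf E)"
    by (intro tendsto_intros)
  moreover have "Sr th = suminf A" by (simp add: Sr_def A_def[abs_def])
  ultimately show ?thesis unfolding eq by simp
qed

end

lemma AE_subseq_L2:
  fixes F :: "nat \<Rightarrow> 'a \<Rightarrow> real"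
  assumes meas: "\<And>n. F n \<in> borel_measurable M"
    and lim: "(\<lambda>n. \<integral>\<^sup>+ x. ennreal ((F n x)\<^sup>2) \<partial>M) \<longlonglongrightarrow> 0"
  shows "\<exists>r. filterlim r at_top at_top \<and> (AE x in M. (\<lambda>k. F (r k) x) \<longlonglongrightarrow> 0)"
proof -
  have "\<forall>k. \<exists>N. \<forall>n\<ge>N. (\<integral>\<^sup>+ x. ennreal ((F n x)\<^sup>2) \<partial>M) < ennreal ((1/2)^k)"
  proof
    fix k :: nat
    have "eventually (\<lambda>n. (\<integral>\<^sup>+ x. ennreal ((F n x)\<^sup>2) \<partial>M) < ennreal ((1/2)^k)) sequentially"
      using lim by (rule order_tendstoD) simp
    then show "\<exists>N. \<forall>n\<ge>N. (\<integral>\<^sup>+ x. ennreal ((F n x)\<^sup>2) \<partial>M) < ennreal ((1/2)^k)"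
      by (simp add: eventually_sequentially)
  qed
  then obtain N where N: "\<And>k n. n \<ge> N k \<Longrightarrow> (\<integral>\<^sup>+ x. ennreal ((F n x)\<^sup>2) \<partial>M) < ennreal ((1/2)^k)"
    by metis
  define r where "r k = N k + k" for k
  have r_ge: "r k \<ge> k" for k by (simp add: r_def)
  have fl: "filterlim r at_top at_top"
    by (rule filterlim_at_top_mono[OF filterlim_ident always_eventually]) (simp add: r_ge)
  have "(\<integral>\<^sup>+ x. (\<Sum>k. ennreal ((F (r k) x)\<^sup>2)) \<partial>M) = (\<Sum>k. \<integral>\<^sup>+ x. ennreal ((F (r k) x)\<^sup>2) \<partial>M)"
    by (rule nn_integral_suminf) (use meas in measurable)
  also have "\<dots> \<le> (\<Sum>k. ennreal ((1/2)^k))"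
  proof (rule suminf_le)
    fix k
    show "(\<integral>\<^sup>+ x. ennreal ((F (r k) x)\<^sup>2) \<partial>M) \<le> ennreal ((1/2)^k)"
      by (rule less_imp_le, rule N) (simp add: r_def)
  qed (rule summableI)+
  also have "\<dots> = ennreal 2"
  proof -
    have gs: "(\<lambda>k. (1/2::real)^k) sums 2" using geometric_sums[of "1/2::real"] by simp
    have "(\<Sum>k. ennreal ((1/2::real)^k)) = ennreal (\<Sum>k. (1/2::real)^k)"
      by (rule suminf_ennreal2) (use gs sums_summable in auto)
    also have "(\<Sum>k. (1/2::real)^k) = 2" using gs sums_unique by metis
    finally show ?thesis .
  qed
  finally have fin: "(\<integral>\<^sup>+ x. (\<Sum>k. ennreal ((F (r k) x)\<^sup>2)) \<partial>M) \<noteq> \<infinity>"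
    by (auto simp: top_unique)
  have "AE x in M. (\<Sum>k. ennreal ((F (r k) x)\<^sup>2)) \<noteq> \<infinity>"
    by (rule nn_integral_PInf_AE[OF _ fin]) (use meas in measurable)
  then have "AE x in M. (\<lambda>k. F (r k) x) \<longlonglongrightarrow> 0"
  proof (rule AE_mp, intro AE_I2 impI)
    fix x assume "(\<Sum>k. ennreal ((F (r k) x)\<^sup>2)) \<noteq> \<infinity>"
    then have "summable (\<lambda>k. (F (r k) x)\<^sup>2)"
      by (intro summable_suminf_not_top) auto
    then have "(\<lambda>k. (F (r k) x)\<^sup>2) \<longlonglongrightarrow> 0" by (rule summable_LIMSEQ_zero)
    then have "(\<lambda>k. sqrt ((F (r k) x)\<^sup>2)) \<longlonglongrightarrow> sqrt 0" by (rule tendsto_real_sqrt)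
    then show "(\<lambda>k. F (r k) x) \<longlonglongrightarrow> 0" by (simp add: tendsto_rabs_zero_iff)
  qed
  with fl show ?thesis by blast
qed

lemma fatou_sq:
  fixes g :: "'a \<Rightarrow> real" and G :: "nat \<Rightarrow> 'a \<Rightarrow> real"
  assumes meas: "\<And>k. G k \<in> borel_measurable M" and wm: "w \<in> borel_measurable M"
    and w0: "\<And>x. w x \<ge> 0"
    and conv: "AE x in M. (\<lambda>k. G k x) \<longlonglongrightarrow> g x"
    and bnd: "\<And>k. (\<integral>\<^sup>+ x. ennreal ((G k x)\<^sup>2 * w x) \<partial>M) \<le> Y k"
    and Ylim: "Y \<longlonglongrightarrow> y"
  shows "(\<integral>\<^sup>+ x. ennreal ((g x)\<^sup>2 * w x) \<partial>M) \<le> y"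
proof -
  have "(\<integral>\<^sup>+ x. ennreal ((g x)\<^sup>2 * w x) \<partial>M) = (\<integral>\<^sup>+ x. liminf (\<lambda>k. ennreal ((G k x)\<^sup>2 * w x)) \<partial>M)"
  proof (rule nn_integral_cong_AE, rule AE_mp[OF conv], intro AE_I2 impI)
    fix x assume "(\<lambda>k. G k x) \<longlonglongrightarrow> g x"
    then have "(\<lambda>k. ennreal ((G k x)\<^sup>2 * w x)) \<longlonglongrightarrow> ennreal ((g x)\<^sup>2 * w x)"
      by (intro tendsto_intros)
    then show "ennreal ((g x)\<^sup>2 * w x) = liminf (\<lambda>k. ennreal ((G k x)\<^sup>2 * w x))"
      by (simp add: lim_imp_Liminf)
  qed
  also have "\<dots> \<le> liminf (\<lambda>k. \<integral>\<^sup>+ x. ennreal ((G k x)\<^sup>2 * w x) \<partial>M)"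
    by (rule nn_integral_liminf) (use meas wm in measurable)
  also have "\<dots> \<le> liminf Y"
    by (intro Liminf_mono always_eventually allI bnd)
  also have "\<dots> = y" using Ylim by (simp add: lim_imp_Liminf)
  finally show ?thesis .
qed

context sgdloc begin

lemma source': "(\<lambda>n. \<integral>\<^sup>+ x. ennreal ((f x - inner (uu n) (phi x))\<^sup>2) \<partial>mu) \<longlonglongrightarrow> 0"
  using source by (simp add: fn_eq)

definition rsq :: "nat \<Rightarrow> nat" where
  "rsq = (SOME r. filterlim r at_top at_top \<and> (AE x in mu. (\<lambda>k. f x - inner (uu (r k)) (phi x)) \<longlonglongrightarrow> 0))"

lemma rsq: "filterlim rsq at_top at_top" "AE x in mu. (\<lambda>k. f x - inner (uu (rsq k)) (phi x)) \<longlonglongrightarrow> 0"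
proof -
  have "\<exists>r. filterlim r at_top at_top \<and> (AE x in mu. (\<lambda>k. f x - inner (uu (r k)) (phi x)) \<longlonglongrightarrow> 0)"
    by (rule AE_subseq_L2[OF _ source']) (use f_meas phi_meas in measurable)
  then have "filterlim rsq at_top at_top \<and> (AE x in mu. (\<lambda>k. f x - inner (uu (rsq k)) (phi x)) \<longlonglongrightarrow> 0)"
    unfolding rsq_def by (rule someI_ex)
  then show "filterlim rsq at_top at_top" "AE x in mu. (\<lambda>k. f x - inner (uu (rsq k)) (phi x)) \<longlonglongrightarrow> 0"
    by auto
qed

lemma conv_r: "AE x in mu. (\<lambda>k. inner (th - uu (rsq k)) (phi x)) \<longlonglongrightarrow> inner th (phi x) - f x"
proof (rule AE_mp[OF rsq(2)], intro AE_I2 impI)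
  fix x assume "(\<lambda>k. f x - inner (uu (rsq k)) (phi x)) \<longlonglongrightarrow> 0"
  then have "(\<lambda>k. (inner th (phi x) - f x) + (f x - inner (uu (rsq k)) (phi x))) \<longlonglongrightarrow> (inner th (phi x) - f x) + 0"
    by (intro tendsto_intros)
  then show "(\<lambda>k. inner (th - uu (rsq k)) (phi x)) \<longlonglongrightarrow> inner th (phi x) - f x"
    by (simp add: inner_diff_left)
qed

lemma Sn_lim_r: "(\<lambda>k. \<Sum>i. lam i * (inner (th - uu (rsq k)) (v i))\<^sup>2) \<longlonglongrightarrow> Sr th"
  using filterlim_compose[OF Sn_lim rsq(1)] by simp

lemma nn_sq_v: "(\<integral>\<^sup>+ x. ennreal ((inner (v j) (phi x))\<^sup>2) \<partial>mu) = ennreal (lam j)"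
proof -
  have "(\<integral>x. inner (v j) (phi x) * inner (v j) (phi x) \<partial>mu) = lam j" using v_eig[of j "v j"] v_orth[of j j] by simp
  then show ?thesis using integrable_sq[of "v j"]
    by (simp add: nn_integral_eq_integral power2_eq_square)
qed

lemma hyper_f:
  "(\<integral>\<^sup>+ x. ennreal ((inner th (phi x) - f x)\<^sup>2 * (inner w (phi x))\<^sup>2) \<partial>mu)
     \<le> ennreal C * (\<integral>\<^sup>+ x. ennreal ((inner w (phi x))\<^sup>2) \<partial>mu) * ennreal (Sr th)"
proof (rule fatou_sq[where G="\<lambda>k x. inner (th - uu (rsq k)) (phi x)"])
  show "(\<lambda>x. inner (th - uu (rsq k)) (phi x)) \<in> borel_measurable mu" for k using phi_meas by measurable
  show "(\<lambda>x. (inner w (phi x))\<^sup>2) \<in> borel_measurable mu" using phi_meas by measurable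
  show "AE x in mu. (\<lambda>k. inner (th - uu (rsq k)) (phi x)) \<longlonglongrightarrow> inner th (phi x) - f x" by (rule conv_r)
  show "(\<integral>\<^sup>+ x. ennreal ((inner (th - uu (rsq k)) (phi x))\<^sup>2 * (inner w (phi x))\<^sup>2) \<partial>mu)
        \<le> ennreal C * (\<integral>\<^sup>+ x. ennreal ((inner w (phi x))\<^sup>2) \<partial>mu) * ennreal (\<Sum>i. lam i * (inner (th - uu (rsq k)) (v i))\<^sup>2)" for k
    using hypercontr[of "th - uu (rsq k)" w] by (simp add: nn_sq mult_ac)
  show "(\<lambda>k. ennreal C * (\<integral>\<^sup>+ x. ennreal ((inner w (phi x))\<^sup>2) \<partial>mu) * ennreal (\<Sum>i. lam i * (inner (th - uu (rsq k)) (v i))\<^sup>2))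
        \<longlonglongrightarrow> ennreal C * (\<integral>\<^sup>+ x. ennreal ((inner w (phi x))\<^sup>2) \<partial>mu) * ennreal (Sr th)"
    by (intro tendsto_intros Sn_lim_r) (simp add: nn_sq ennreal_mult_eq_top_iff)
qed simp

lemma risk_bound: "excess_risk mu phi f th \<le> ennreal (Sr th / 2)"
  unfolding excess_risk_def
proof -
  have "(\<integral>\<^sup>+ x. ennreal ((inner th (phi x) - f x)\<^sup>2 * (1/2)) \<partial>mu) \<le> ennreal (Sr th / 2)"
  proof (rule fatou_sq[where G="\<lambda>k x. inner (th - uu (rsq k)) (phi x)"])
    show "(\<lambda>x. inner (th - uu (rsq k)) (phi x)) \<in> borel_measurable mu" for k using phi_meas by measurable
    show "AE x in mu. (\<lambda>k. inner (th - uu (rsq k)) (phi x)) \<longlonglongrightarrow> inner th (phi x) - f x" by (rule conv_r)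
    show "(\<integral>\<^sup>+ x. ennreal ((inner (th - uu (rsq k)) (phi x))\<^sup>2 * (1/2)) \<partial>mu)
        \<le> ennreal ((\<Sum>i. lam i * (inner (th - uu (rsq k)) (v i))\<^sup>2) / 2)" for k
    proof -
      have "(\<integral>\<^sup>+ x. ennreal ((inner (th - uu (rsq k)) (phi x))\<^sup>2 * (1/2)) \<partial>mu)
          = (\<integral>\<^sup>+ x. ennreal (1/2) * ennreal ((inner (th - uu (rsq k)) (phi x))\<^sup>2) \<partial>mu)"
        by (intro nn_integral_cong) (use ennreal_mult'[of "1/2::real" "(inner (th - uu (rsq k)) (phi _))^2"] in \<open>simp add: mult.commute\<close>)
      also have "\<dots> = ennreal (1/2) * (\<integral>\<^sup>+ x. ennreal ((inner (th - uu (rsq k)) (phi x))\<^sup>2) \<partial>mu)"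
        by (rule nn_integral_cmult) (use phi_meas in measurable)
      also have "\<dots> = ennreal ((\<Sum>i. lam i * (inner (th - uu (rsq k)) (v i))\<^sup>2) / 2)"
        using ennreal_mult'[of "1/2::real" "\<Sum>i. lam i * (inner (th - uu (rsq k)) (v i))\<^sup>2"]
        by (simp add: nn_sq mult.commute)
      finally show ?thesis by simp
    qed
    show "(\<lambda>k. ennreal ((\<Sum>i. lam i * (inner (th - uu (rsq k)) (v i))\<^sup>2) / 2)) \<longlonglongrightarrow> ennreal (Sr th / 2)"
      by (intro tendsto_intros Sn_lim_r) simp
  qed simp_all
  then show "(\<integral>\<^sup>+ x. ennreal ((inner th (phi x) - f x)\<^sup>2 / 2) \<partial>mu) \<le> ennreal (Sr th / 2)"
    by simp
qed

end

context sgdloc begin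

lemma prob_mu: "prob_space mu" by (rule prob)

lemma lin_step:
  assumes eta0: "0 \<le> eta" and etal: "eta * lam j \<le> 1"
  shows "(\<integral>\<^sup>+ x. ennreal ((inner th (v j) - eta * inner th (phi x) * inner (v j) (phi x))\<^sup>2) \<partial>mu)
    \<le> ennreal ((1 - eta * lam j) * (inner th (v j))\<^sup>2)
       + ennreal (eta\<^sup>2) * (ennreal C * ennreal (lam j) * ennreal (\<Sum>i. lam i * (inner th (v i))\<^sup>2))"
proof -
  define p where "p x = inner th (phi x)" for x
  define g where "g x = inner (v j) (phi x)" for x
  define d where "d = inner th (v j)"
  define SS where "SS = (\<Sum>i. lam i * (inner th (v i))\<^sup>2)"
  have pm[measurable]: "p \<in> borel_measurable mu" unfolding p_def using phi_meas by measurable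
  have gm[measurable]: "g \<in> borel_measurable mu" unfolding g_def using phi_meas by measurable
  have I2: "(\<integral>\<^sup>+ x. ennreal ((p x)\<^sup>2 * (g x)\<^sup>2) \<partial>mu) \<le> ennreal C * ennreal SS * ennreal (lam j)"
    using hypercontr[of th "v j", unfolded nn_sq_v nn_sq] unfolding p_def g_def SS_def by simp
  have intpg2: "integrable mu (\<lambda>x. (p x)\<^sup>2 * (g x)\<^sup>2)"
  proof (rule integrableI_nonneg)
    show "(\<integral>\<^sup>+ x. ennreal ((p x)\<^sup>2 * (g x)\<^sup>2) \<partial>mu) < \<infinity>"
      using I2 by (rule le_less_trans) (simp flip: ennreal_mult'' ennreal_mult add: ennreal_mult_less_top)
  qed auto
  have intp: "integrable mu (\<lambda>x. (p x)\<^sup>2)" unfolding p_def by (rule integrable_sq)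
  have intg: "integrable mu (\<lambda>x. (g x)\<^sup>2)" unfolding g_def by (rule integrable_sq)
  have intgp: "integrable mu (\<lambda>x. g x * p x)"
  proof (rule Bochner_Integration.integrable_bound[OF Bochner_Integration.integrable_add[OF intp intg]])
    show "AE x in mu. norm (g x * p x) \<le> norm ((p x)\<^sup>2 + (g x)\<^sup>2)"
    proof (intro AE_I2)
      fix x
      have "0 \<le> (\<bar>g x\<bar> - \<bar>p x\<bar>)\<^sup>2" by simp
      moreover have "(\<bar>g x\<bar> - \<bar>p x\<bar>)\<^sup>2 = (g x)\<^sup>2 + (p x)\<^sup>2 - 2 * \<bar>g x\<bar> * \<bar>p x\<bar>"
        by (simp add: power2_diff)
      moreover have "0 \<le> \<bar>g x\<bar> * \<bar>p x\<bar>" by simp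
      ultimately have "\<bar>g x * p x\<bar> \<le> (p x)\<^sup>2 + (g x)\<^sup>2"
        unfolding abs_mult by linarith
      then show "norm (g x * p x) \<le> norm ((p x)\<^sup>2 + (g x)\<^sup>2)" by simp
    qed
  qed simp
  have Egp: "(\<integral>x. g x * p x \<partial>mu) = lam j * d"
    using v_eig[of j th] unfolding g_def p_def d_def by (simp add: inner_commute)
  have Q: "(d - eta * p x * g x)\<^sup>2 = d\<^sup>2 - (2 * eta * d) * (g x * p x) + eta\<^sup>2 * ((p x)\<^sup>2 * (g x)\<^sup>2)" for x
    by (simp add: power2_eq_square algebra_simps)
  have intQ: "integrable mu (\<lambda>x. d\<^sup>2 - (2 * eta * d) * (g x * p x) + eta\<^sup>2 * ((p x)\<^sup>2 * (g x)\<^sup>2))"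
    by (intro Bochner_Integration.integrable_add Bochner_Integration.integrable_diff integrable_mult_right intgp intpg2
          finite_measure.integrable_const[OF prob_space.finite_measure[OF prob_mu]])
  have EQ: "(\<integral>x. d\<^sup>2 - (2 * eta * d) * (g x * p x) + eta\<^sup>2 * ((p x)\<^sup>2 * (g x)\<^sup>2) \<partial>mu)
      = d\<^sup>2 - (2 * eta * d) * (lam j * d) + eta\<^sup>2 * (\<integral>x. (p x)\<^sup>2 * (g x)\<^sup>2 \<partial>mu)"
    using prob_space.prob_space[OF prob_mu]
    by (subst Bochner_Integration.integral_add Bochner_Integration.integral_diff;
        (intro Bochner_Integration.integrable_add Bochner_Integration.integrable_diff integrable_mult_right intgp intpg2
          finite_measure.integrable_const[OF prob_space.finite_measure[OF prob_mu]])?)+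
       (simp add: Egp)
  define I where "I = (\<integral>x. (p x)\<^sup>2 * (g x)\<^sup>2 \<partial>mu)"
  have I0: "I \<ge> 0" unfolding I_def by (intro integral_nonneg_AE) auto
  have eI: "ennreal I = (\<integral>\<^sup>+ x. ennreal ((p x)\<^sup>2 * (g x)\<^sup>2) \<partial>mu)"
    unfolding I_def using intpg2 by (simp add: nn_integral_eq_integral)
  have "(\<integral>\<^sup>+ x. ennreal ((d - eta * p x * g x)\<^sup>2) \<partial>mu)
      = ennreal (\<integral>x. d\<^sup>2 - (2 * eta * d) * (g x * p x) + eta\<^sup>2 * ((p x)\<^sup>2 * (g x)\<^sup>2) \<partial>mu)"
    unfolding Q[symmetric] using intQ unfolding Q[symmetric] by (simp add: nn_integral_eq_integral)
  also have "\<dots> = ennreal (d\<^sup>2 - 2 * eta * lam j * d\<^sup>2 + eta\<^sup>2 * I)"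
    unfolding EQ I_def by (simp add: power2_eq_square algebra_simps)
  also have "\<dots> \<le> ennreal ((1 - eta * lam j) * d\<^sup>2 + eta\<^sup>2 * I)"
    using eta0 lam_nonneg[of j] by (intro ennreal_leI) (simp add: algebra_simps)
  also have "\<dots> = ennreal ((1 - eta * lam j) * d\<^sup>2) + ennreal (eta\<^sup>2) * ennreal I"
  proof -
    have A0: "0 \<le> (1 - eta * lam j) * d\<^sup>2" using etal by simp
    have "ennreal ((1 - eta * lam j) * d\<^sup>2 + eta\<^sup>2 * I) = ennreal ((1 - eta * lam j) * d\<^sup>2) + ennreal (eta\<^sup>2 * I)"
      by (rule ennreal_plus[OF A0]) (use I0 in simp)
    also have "ennreal (eta\<^sup>2 * I) = ennreal (eta\<^sup>2) * ennreal I" by (rule ennreal_mult) (simp_all add: I0)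
    finally show ?thesis .
  qed
  also have "\<dots> \<le> ennreal ((1 - eta * lam j) * d\<^sup>2) + ennreal (eta\<^sup>2) * (ennreal C * ennreal (lam j) * ennreal SS)"
    unfolding eI using I2 by (intro add_mono mult_left_mono) (auto simp: mult_ac)
  finally show ?thesis unfolding p_def g_def d_def SS_def by simp
qed

lemma dconv: "(\<lambda>k. inner (th - uu (rsq k)) (v j)) \<longlonglongrightarrow> inner th (v j) - tt j"
proof (rule tendsto_eventually)
  have "eventually (\<lambda>k. Suc j \<le> rsq k) sequentially"
    using rsq(1) by (simp add: filterlim_at_top)
  then show "eventually (\<lambda>k. inner (th - uu (rsq k)) (v j) = inner th (v j) - tt j) sequentially"
    by eventually_elim (simp add: inner_diff_uu)
qed

lemma step_f:
  assumes eta0: "0 \<le> eta" and etal: "eta * lam j \<le> 1"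
  shows "(\<integral>\<^sup>+ x. ennreal ((inner th (v j) - tt j - eta * (inner th (phi x) - f x) * inner (v j) (phi x))\<^sup>2) \<partial>mu)
    \<le> ennreal ((1 - eta * lam j) * (inner th (v j) - tt j)\<^sup>2)
       + ennreal (eta\<^sup>2) * (ennreal C * ennreal (lam j) * ennreal (Sr th))"
proof -
  have "(\<integral>\<^sup>+ x. ennreal ((inner th (v j) - tt j - eta * (inner th (phi x) - f x) * inner (v j) (phi x))\<^sup>2 * 1) \<partial>mu)
    \<le> ennreal ((1 - eta * lam j) * (inner th (v j) - tt j)\<^sup>2)
       + ennreal (eta\<^sup>2) * (ennreal C * ennreal (lam j) * ennreal (Sr th))"
  proof (rule fatou_sq[where G="\<lambda>k x. inner (th - uu (rsq k)) (v j) - eta * inner (th - uu (rsq k)) (phi x) * inner (v j) (phi x)"])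
    show "(\<lambda>x. inner (th - uu (rsq k)) (v j) - eta * inner (th - uu (rsq k)) (phi x) * inner (v j) (phi x)) \<in> borel_measurable mu" for k
      using phi_meas by measurable
    show "AE x in mu. (\<lambda>k. inner (th - uu (rsq k)) (v j) - eta * inner (th - uu (rsq k)) (phi x) * inner (v j) (phi x))
        \<longlonglongrightarrow> inner th (v j) - tt j - eta * (inner th (phi x) - f x) * inner (v j) (phi x)"
      by (rule AE_mp[OF conv_r[of th]], intro AE_I2 impI) (intro tendsto_intros dconv)
    show "(\<integral>\<^sup>+ x. ennreal ((inner (th - uu (rsq k)) (v j) - eta * inner (th - uu (rsq k)) (phi x) * inner (v j) (phi x))\<^sup>2 * 1) \<partial>mu)
      \<le> ennreal ((1 - eta * lam j) * (inner (th - uu (rsq k)) (v j))\<^sup>2)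
       + ennreal (eta\<^sup>2) * (ennreal C * ennreal (lam j) * ennreal (\<Sum>i. lam i * (inner (th - uu (rsq k)) (v i))\<^sup>2))" for k
      using lin_step[OF eta0 etal, of "th - uu (rsq k)"] by simp
    show "(\<lambda>k. ennreal ((1 - eta * lam j) * (inner (th - uu (rsq k)) (v j))\<^sup>2)
       + ennreal (eta\<^sup>2) * (ennreal C * ennreal (lam j) * ennreal (\<Sum>i. lam i * (inner (th - uu (rsq k)) (v i))\<^sup>2)))
      \<longlonglongrightarrow> ennreal ((1 - eta * lam j) * (inner th (v j) - tt j)\<^sup>2)
       + ennreal (eta\<^sup>2) * (ennreal C * ennreal (lam j) * ennreal (Sr th))"
      by (intro tendsto_intros dconv Sn_lim_r) (simp_all add: ennreal_mult_eq_top_iff)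
  qed simp_all
  then show ?thesis by simp
qed

end

lemma normal_sq:
  assumes sp: "0 < (sg::real)"
  shows "(\<integral>\<^sup>+ e. ennreal ((A + B * e)\<^sup>2) \<partial>density lborel (normal_density 0 sg)) = ennreal (A\<^sup>2 + B\<^sup>2 * sg\<^sup>2)"
proof -
  have h0: "has_bochner_integral lborel (\<lambda>e. normal_density 0 sg e) 1"
    using normal_moment_even[OF sp, of 0 0] by simp
  have h1: "has_bochner_integral lborel (\<lambda>e. normal_density 0 sg e * e) 0"
    using normal_moment_odd[OF sp, of 0 0] by simp
  have h2: "has_bochner_integral lborel (\<lambda>e. normal_density 0 sg e * e\<^sup>2) (sg\<^sup>2)"
    using normal_moment_even[OF sp, of 0 1] by simp
  have "has_bochner_integral lborel (\<lambda>e. A\<^sup>2 * normal_density 0 sg e + (2 * A * B) * (normal_density 0 sg e * e)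
          + B\<^sup>2 * (normal_density 0 sg e * e\<^sup>2)) (A\<^sup>2 * 1 + (2 * A * B) * 0 + B\<^sup>2 * sg\<^sup>2)"
    by (intro has_bochner_integral_add has_bochner_integral_mult_right h0 h1 h2)
  then have hb: "has_bochner_integral lborel (\<lambda>e. normal_density 0 sg e * (A + B * e)\<^sup>2) (A\<^sup>2 + B\<^sup>2 * sg\<^sup>2)"
    by (rule has_bochner_integral_cong[THEN iffD1, rotated 3]) (auto simp: power2_eq_square algebra_simps)
  have "(\<integral>\<^sup>+ e. ennreal ((A + B * e)\<^sup>2) \<partial>density lborel (normal_density 0 sg))
      = (\<integral>\<^sup>+ e. ennreal (normal_density 0 sg e) * ennreal ((A + B * e)\<^sup>2) \<partial>lborel)"
    by (subst nn_integral_density) auto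
  also have "\<dots> = (\<integral>\<^sup>+ e. ennreal (normal_density 0 sg e * (A + B * e)\<^sup>2) \<partial>lborel)"
    by (intro nn_integral_cong) (simp add: ennreal_mult normal_density_nonneg)
  also have "\<dots> = ennreal (A\<^sup>2 + B\<^sup>2 * sg\<^sup>2)"
    using hb by (subst nn_integral_eq_integral) (auto simp: has_bochner_integral_iff normal_density_nonneg)
  finally show ?thesis .
qed


context sgdloc begin

abbreviation "NN \<equiv> density lborel (normal_density 0 sig)"
abbreviation "Dd \<equiv> data_dist mu f sig"

lemma prob_NN: "prob_space NN" using prob_space_normal_density sigma_pos by auto

lemma T_meas: "(\<lambda>(x, e). (x, f x + e)) \<in> measurable (mu \<Otimes>\<^sub>M NN) (mu \<Otimes>\<^sub>M borel)"
  using f_meas by measurable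

lemma sets_Dd: "sets Dd = sets (mu \<Otimes>\<^sub>M borel)"
  unfolding data_dist_def by simp

lemma prob_Dd: "prob_space Dd"
  unfolding data_dist_def
proof (rule prob_space.prob_space_distr)
  show "prob_space (mu \<Otimes>\<^sub>M NN)"
    by (intro prob_space_pair prob_mu prob_NN)
  show "(\<lambda>(x, e). (x, f x + e)) \<in> measurable (mu \<Otimes>\<^sub>M NN) (mu \<Otimes>\<^sub>M borel)" by (rule T_meas)
qed

lemma nn_Dd:
  assumes H: "H \<in> borel_measurable (mu \<Otimes>\<^sub>M borel)"
  shows "(\<integral>\<^sup>+ w. H w \<partial>Dd) = (\<integral>\<^sup>+ x. \<integral>\<^sup>+ e. H (x, f x + e) \<partial>NN \<partial>mu)"
proof -
  have "(\<integral>\<^sup>+ w. H w \<partial>Dd) = (\<integral>\<^sup>+ p. H ((\<lambda>(x, e). (x, f x + e)) p) \<partial>(mu \<Otimes>\<^sub>M NN))"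
    unfolding data_dist_def
    by (rule nn_integral_distr[OF T_meas]) (use H in \<open>simp add: measurable_cong_sets[OF sets_distr refl]\<close>)
  also have "\<dots> = (\<integral>\<^sup>+ x. \<integral>\<^sup>+ e. H (x, f x + e) \<partial>NN \<partial>mu)"
  proof (subst sigma_finite_measure.nn_integral_fst[symmetric])
    show "sigma_finite_measure NN" using prob_NN by (simp add: prob_space_imp_sigma_finite)
    show "(\<lambda>p. H ((\<lambda>(x, e). (x, f x + e)) p)) \<in> borel_measurable (mu \<Otimes>\<^sub>M NN)"
      using measurable_comp[OF T_meas H] by (simp add: comp_def)
  qed simp
  finally show ?thesis .
qed

lemma step_D:
  assumes eta0: "0 \<le> eta" and etal: "eta * lam j \<le> 1"
  shows "(\<integral>\<^sup>+ w. ennreal ((inner (th - (eta * (inner th (phi (fst w)) - snd w)) *\<^sub>R phi (fst w)) (v j) - tt j)\<^sup>2) \<partial>Dd)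
    \<le> ennreal ((1 - eta * lam j) * (inner th (v j) - tt j)\<^sup>2)
       + ennreal (eta\<^sup>2) * (ennreal C * ennreal (lam j) * ennreal (Sr th))
       + ennreal (eta\<^sup>2 * sig\<^sup>2) * ennreal (lam j)"
proof -
  define d where "d = inner th (v j) - tt j"
  have "(\<integral>\<^sup>+ w. ennreal ((inner (th - (eta * (inner th (phi (fst w)) - snd w)) *\<^sub>R phi (fst w)) (v j) - tt j)\<^sup>2) \<partial>Dd)
     = (\<integral>\<^sup>+ x. \<integral>\<^sup>+ e. ennreal ((inner (th - (eta * (inner th (phi x) - (f x + e))) *\<^sub>R phi x) (v j) - tt j)\<^sup>2) \<partial>NN \<partial>mu)"
    by (subst nn_Dd) (use phi_meas in \<open>simp_all\<close>, measurable)
  also have "\<dots> = (\<integral>\<^sup>+ x. ennreal ((d - eta * (inner th (phi x) - f x) * inner (v j) (phi x))\<^sup>2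
                    + (eta * inner (v j) (phi x))\<^sup>2 * sig\<^sup>2) \<partial>mu)"
  proof (intro nn_integral_cong)
    fix x
    have eq: "inner (th - (eta * (inner th (phi x) - (f x + e))) *\<^sub>R phi x) (v j) - tt j
        = (d - eta * (inner th (phi x) - f x) * inner (v j) (phi x)) + (eta * inner (v j) (phi x)) * e" for e
      by (auto simp: d_def inner_diff_left inner_commute algebra_simps)
    then show "(\<integral>\<^sup>+ e. ennreal ((inner (th - (eta * (inner th (phi x) - (f x + e))) *\<^sub>R phi x) (v j) - tt j)\<^sup>2) \<partial>NN)
      = ennreal ((d - eta * (inner th (phi x) - f x) * inner (v j) (phi x))\<^sup>2 + (eta * inner (v j) (phi x))\<^sup>2 * sig\<^sup>2)"
      by (simp only: eq normal_sq[OF sigma_pos])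
  qed
  also have "\<dots> = (\<integral>\<^sup>+ x. ennreal ((d - eta * (inner th (phi x) - f x) * inner (v j) (phi x))\<^sup>2) \<partial>mu)
      + (\<integral>\<^sup>+ x. ennreal (eta\<^sup>2 * sig\<^sup>2) * ennreal ((inner (v j) (phi x))\<^sup>2) \<partial>mu)"
    by (subst nn_integral_add[symmetric]) (use phi_meas f_meas in \<open>auto intro!: nn_integral_cong simp: ennreal_mult[symmetric] power_mult_distrib mult_ac\<close>)
  also have "\<dots> = (\<integral>\<^sup>+ x. ennreal ((d - eta * (inner th (phi x) - f x) * inner (v j) (phi x))\<^sup>2) \<partial>mu)
      + ennreal (eta\<^sup>2 * sig\<^sup>2) * ennreal (lam j)"
    by (subst nn_integral_cmult) (use phi_meas in \<open>simp_all add: nn_sq_v\<close>)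
  also have "\<dots> \<le> ennreal ((1 - eta * lam j) * d\<^sup>2)
       + ennreal (eta\<^sup>2) * (ennreal C * ennreal (lam j) * ennreal (Sr th))
       + ennreal (eta\<^sup>2 * sig\<^sup>2) * ennreal (lam j)"
    using step_f[OF eta0 etal, of th] unfolding d_def by (intro add_mono) auto
  finally show ?thesis unfolding d_def .
qed

end

lemma sgd_upd: "n \<le> k \<Longrightarrow> sgd_iter eta phi (z(k := w)) n = sgd_iter eta phi z n"
  by (induction n) (auto simp: Let_def)

context sgdloc begin

lemma phi_fst_meas: "(\<lambda>w. phi (fst w)) \<in> borel_measurable Dd"
  by (subst measurable_cong_sets[OF sets_Dd refl]) (use phi_meas in measurable)

lemma snd_meas: "(\<lambda>w. snd w) \<in> borel_measurable Dd"
  by (subst measurable_cong_sets[OF sets_Dd refl]) measurable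

lemma sgd_meas: "{..<k} \<subseteq> I \<Longrightarrow> (\<lambda>z. sgd_iter eta phi z k) \<in> borel_measurable (PiM I (\<lambda>_. Dd))"
proof (induction k)
  case 0
  then show ?case by simp
next
  case (Suc k)
  then have kI: "k \<in> I" and "{..<k} \<subseteq> I" by auto
  with Suc.IH have IH: "(\<lambda>z. sgd_iter eta phi z k) \<in> borel_measurable (PiM I (\<lambda>_. Dd))" by blast
  have c: "(\<lambda>z. z k) \<in> measurable (PiM I (\<lambda>_. Dd)) Dd" using kI by (rule measurable_component_singleton)
  have p: "(\<lambda>z. phi (fst (z k))) \<in> borel_measurable (PiM I (\<lambda>_. Dd))"
    using measurable_compose[OF c phi_fst_meas] .
  have y: "(\<lambda>z. snd (z k)) \<in> borel_measurable (PiM I (\<lambda>_. Dd))"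
    using measurable_compose[OF c snd_meas] .
  show ?case using IH p y by (simp add: Let_def) measurable
qed

lemma psf: "product_sigma_finite (\<lambda>_. Dd)"
  unfolding product_sigma_finite_def using prob_Dd by (simp add: prob_space_imp_sigma_finite)

definition DD :: "(nat \<Rightarrow> real) \<Rightarrow> nat \<Rightarrow> nat \<Rightarrow> ennreal" where
  "DD eta j k = (\<integral>\<^sup>+ z. ennreal ((inner (sgd_iter eta phi z k) (v j) - tt j)\<^sup>2) \<partial>PiM {..<k} (\<lambda>_. Dd))"

lemma DD_0: "DD eta j 0 = ennreal ((tt j)\<^sup>2)"
  unfolding DD_def by (simp add: PiM_empty)

lemma Sr_ennreal: "ennreal (Sr th) = (\<Sum>i. ennreal (lam i) * ennreal ((inner th (v i) - tt i)\<^sup>2))"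
  unfolding Sr_def using Sr_summable[of th] lam_nonneg
  by (subst suminf_ennreal2[symmetric]) (auto simp: ennreal_mult)

lemma int_Sr: "(\<integral>\<^sup>+ z. ennreal (Sr (sgd_iter eta phi z k)) \<partial>PiM {..<k} (\<lambda>_. Dd)) = (\<Sum>i. ennreal (lam i) * DD eta i k)"
  unfolding Sr_ennreal DD_def
  by (subst nn_integral_suminf; (subst nn_integral_cmult)?) (use sgd_meas[of k "{..<k}" eta] in \<open>auto\<close>)


lemma Sr_meas: "(\<lambda>z. ennreal (Sr (sgd_iter eta phi z k))) \<in> borel_measurable (PiM {..<k} (\<lambda>_. Dd))"
  unfolding Sr_ennreal using sgd_meas[of k "{..<k}" eta] by measurable

lemma prob_PP: "prob_space (PiM I (\<lambda>_. Dd))"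
  by (rule prob_space_PiM) (use prob_Dd in auto)

lemma DD_Suc:
  assumes eta0: "0 \<le> eta k" and etal: "eta k * lam j \<le> 1"
  shows "DD eta j (Suc k) \<le> ennreal (1 - eta k * lam j) * DD eta j k
     + ennreal ((eta k)\<^sup>2) * (ennreal C * ennreal (lam j) * (\<Sum>i. ennreal (lam i) * DD eta i k))
     + ennreal ((eta k)\<^sup>2 * sig\<^sup>2) * ennreal (lam j)"
proof -
  let ?P = "PiM {..<k} (\<lambda>_. Dd)"
  let ?th = "\<lambda>z. sgd_iter eta phi z k"
  have "DD eta j (Suc k) = (\<integral>\<^sup>+ z. ennreal ((inner (sgd_iter eta phi z (Suc k)) (v j) - tt j)\<^sup>2) \<partial>PiM (insert k {..<k}) (\<lambda>_. Dd))"
    unfolding DD_def lessThan_Suc ..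
  also have "\<dots> = (\<integral>\<^sup>+ z. \<integral>\<^sup>+ w. ennreal ((inner (sgd_iter eta phi (z(k := w)) (Suc k)) (v j) - tt j)\<^sup>2) \<partial>Dd \<partial>?P)"
  proof (rule product_sigma_finite.product_nn_integral_insert[OF psf])
    have m: "(\<lambda>z. sgd_iter eta phi z (Suc k)) \<in> borel_measurable (PiM (insert k {..<k}) (\<lambda>_. Dd))"
      by (rule sgd_meas) auto
    show "(\<lambda>z. ennreal ((inner (sgd_iter eta phi z (Suc k)) (v j) - tt j)\<^sup>2)) \<in> borel_measurable (PiM (insert k {..<k}) (\<lambda>_. Dd))"
      using m by measurable
  qed auto
  also have "\<dots> = (\<integral>\<^sup>+ z. \<integral>\<^sup>+ w. ennreal ((inner (?th z - (eta k * (inner (?th z) (phi (fst w)) - snd w)) *\<^sub>R phi (fst w)) (v j) - tt j)\<^sup>2) \<partial>Dd \<partial>?P)"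
    by (simp add: sgd_upd Let_def)
  also have "\<dots> \<le> (\<integral>\<^sup>+ z. ennreal (1 - eta k * lam j) * ennreal ((inner (?th z) (v j) - tt j)\<^sup>2)
       + ennreal ((eta k)\<^sup>2) * (ennreal C * ennreal (lam j) * ennreal (Sr (?th z)))
       + ennreal ((eta k)\<^sup>2 * sig\<^sup>2) * ennreal (lam j) \<partial>?P)"
    by (intro nn_integral_mono order.trans[OF step_D[OF eta0 etal]]) (use etal in \<open>simp add: ennreal_mult\<close>)
  also have "\<dots> = ennreal (1 - eta k * lam j) * DD eta j k
     + ennreal ((eta k)\<^sup>2) * (ennreal C * ennreal (lam j) * (\<Sum>i. ennreal (lam i) * DD eta i k))
     + ennreal ((eta k)\<^sup>2 * sig\<^sup>2) * ennreal (lam j)"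
  proof -
    have m1: "(\<lambda>z. ennreal ((inner (?th z) (v j) - tt j)\<^sup>2)) \<in> borel_measurable ?P"
      using sgd_meas[of k "{..<k}" eta] by measurable
    have m2: "(\<lambda>z. ennreal (Sr (?th z))) \<in> borel_measurable ?P" by (rule Sr_meas)
    have c: "(\<integral>\<^sup>+ z. ennreal (lam j) \<partial>?P) = ennreal (lam j)"
      using prob_space.emeasure_space_1[OF prob_PP[of "{..<k}"]] by simp
    show ?thesis
      using m1 m2
      by (simp add: nn_integral_add nn_integral_cmult DD_def[symmetric] int_Sr[symmetric] c del: nn_integral_const)
  qed
  finally show ?thesis .
qed

lemma risk_DD: "expected_risk mu phi f sig eta N \<le> ennreal (1/2) * (\<Sum>i. ennreal (lam i) * DD eta i N)"
proof -
  have "expected_risk mu phi f sig eta N \<le> (\<integral>\<^sup>+ z. ennreal (1/2) * ennreal (Sr (sgd_iter eta phi z N)) \<partial>PiM {..<N} (\<lambda>_. Dd))"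
    unfolding expected_risk_def
  proof (intro nn_integral_mono)
    fix z
    have h: "ennreal (Sr th / 2) = ennreal (1/2) * ennreal (Sr th)" for th
      using ennreal_mult'[of "1/2::real" "Sr th"] by (simp add: mult.commute)
    show "excess_risk mu phi f (sgd_iter eta phi z N) \<le> ennreal (1/2) * ennreal (Sr (sgd_iter eta phi z N))"
      by (simp only: h[symmetric] risk_bound)
  qed
  also have "\<dots> = ennreal (1/2) * (\<Sum>i. ennreal (lam i) * DD eta i N)"
    using Sr_meas[of eta N] by (simp add: nn_integral_cmult int_Sr)
  finally show ?thesis .
qed

end

definition Pr :: "(nat \<Rightarrow> real) \<Rightarrow> real \<Rightarrow> nat \<Rightarrow> nat \<Rightarrow> real" where
  "Pr e l a b = (\<Prod>m\<in>{a..<b}. 1 - e m * l)"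

lemma Pr_Suc: "a \<le> k \<Longrightarrow> Pr e l a (Suc k) = Pr e l a k * (1 - e k * l)"
  unfolding Pr_def by (simp add: prod.atLeastLessThan_Suc)

lemma Pr_same[simp]: "Pr e l k k = 1" unfolding Pr_def by simp

lemma Pr_nonneg: "(\<And>m. e m * l \<le> 1) \<Longrightarrow> 0 \<le> Pr e l a b"
  unfolding Pr_def by (intro prod_nonneg) (auto simp: algebra_simps)

lemma Pr_le1: "(\<And>m. e m * l \<le> 1) \<Longrightarrow> (\<And>m. 0 \<le> e m * l) \<Longrightarrow> Pr e l a b \<le> 1"
  unfolding Pr_def by (intro prod_le_1) (auto simp: algebra_simps)

lemma Pr_exp: "(\<And>m. e m * l \<le> 1) \<Longrightarrow> Pr e l a b \<le> exp (- l * (\<Sum>m\<in>{a..<b}. e m))"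
proof -
  assume h: "\<And>m. e m * l \<le> 1"
  have "Pr e l a b \<le> (\<Prod>m\<in>{a..<b}. exp (- (e m * l)))"
    unfolding Pr_def
  proof (rule prod_mono)
    fix m
    show "0 \<le> 1 - e m * l \<and> 1 - e m * l \<le> exp (- (e m * l))"
      using h[of m] exp_ge_add_one_self[of "- (e m * l)"] by simp
  qed
  also have "\<dots> = exp (- l * (\<Sum>m\<in>{a..<b}. e m))"
    by (simp add: exp_sum[symmetric] sum_distrib_left sum_negf mult.commute)
  finally show ?thesis .
qed

lemma telescope_Pr:
  assumes "\<And>m. e m * l \<le> 1"
  shows "(\<Sum>i<k. e i * l * Pr e l (Suc i) k) = 1 - Pr e l 0 k"
proof (induction k)
  case 0 then show ?case by (simp add: Pr_def)
next
  case (Suc k)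
  have "(\<Sum>i<Suc k. e i * l * Pr e l (Suc i) (Suc k)) = (\<Sum>i<k. e i * l * Pr e l (Suc i) k) * (1 - e k * l) + e k * l"
    by (simp add: sum_distrib_left sum_distrib_right Pr_Suc mult_ac)
  also have "\<dots> = 1 - Pr e l 0 (Suc k)"
    by (simp only: Suc.IH Pr_Suc[OF le0]) (simp add: algebra_simps)
  finally show ?case .
qed

lemma unroll:
  fixes D V :: "nat \<Rightarrow> ennreal"
  assumes el1: "\<And>k. e k * l \<le> 1" and l0: "0 \<le> l"
    and rec: "\<And>k. D (Suc k) \<le> ennreal (1 - e k * l) * D k + ennreal ((e k)\<^sup>2 * l) * V k"
  shows "D k \<le> ennreal (Pr e l 0 k) * D 0 + (\<Sum>i<k. ennreal ((e i)\<^sup>2 * l * Pr e l (Suc i) k) * V i)"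
proof (induction k)
  case 0 then show ?case by simp
next
  case (Suc k)
  have a0: "0 \<le> 1 - e k * l" using el1[of k] by simp
  have Pn: "0 \<le> Pr e l a b" for a b by (rule Pr_nonneg[OF el1])
  have "D (Suc k) \<le> ennreal (1 - e k * l) * D k + ennreal ((e k)\<^sup>2 * l) * V k" by (rule rec)
  also have "\<dots> \<le> ennreal (1 - e k * l) * (ennreal (Pr e l 0 k) * D 0 + (\<Sum>i<k. ennreal ((e i)\<^sup>2 * l * Pr e l (Suc i) k) * V i))
       + ennreal ((e k)\<^sup>2 * l) * V k"
    by (intro add_mono mult_left_mono Suc.IH) auto
  also have "\<dots> = ennreal (Pr e l 0 (Suc k)) * D 0 + (\<Sum>i<Suc k. ennreal ((e i)\<^sup>2 * l * Pr e l (Suc i) (Suc k)) * V i)"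
    using a0 Pn l0
    by (simp add: distrib_left sum_distrib_left Pr_Suc ennreal_mult[symmetric] mult_ac)
  finally show ?case .
qed

lemma H_le:
  assumes el1: "\<And>k. e k * l \<le> 1" and l0: "0 \<le> l" and e0: "\<And>k. 0 \<le> e k" and ec: "\<And>k. e k \<le> c0"
  shows "(\<Sum>i<k. (e i)\<^sup>2 * l * Pr e l (Suc i) k) \<le> c0"
proof -
  have "(\<Sum>i<k. (e i)\<^sup>2 * l * Pr e l (Suc i) k) \<le> (\<Sum>i<k. c0 * (e i * l * Pr e l (Suc i) k))"
  proof (intro sum_mono)
    fix i
    have "0 \<le> e i * l * Pr e l (Suc i) k" using e0[of i] l0 Pr_nonneg[OF el1] by simp
    from mult_right_mono[OF ec[of i] this]
    show "(e i)\<^sup>2 * l * Pr e l (Suc i) k \<le> c0 * (e i * l * Pr e l (Suc i) k)"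
      by (simp add: power2_eq_square mult_ac)
  qed
  also have "\<dots> = c0 * (1 - Pr e l 0 k)" by (simp add: sum_distrib_left[symmetric] telescope_Pr[OF el1])
  also have "\<dots> \<le> c0"
  proof -
    have "0 \<le> c0" using e0[of 0] ec[of 0] by simp
    moreover have "0 \<le> Pr e l 0 k" by (rule Pr_nonneg[OF el1])
    ultimately show ?thesis by (simp add: mult_left_le)
  qed
  finally show ?thesis .
qed

lemma H_nonneg:
  assumes el1: "\<And>k. e k * l \<le> 1" and l0: "0 \<le> l"
  shows "0 \<le> (\<Sum>i<k. (e i)\<^sup>2 * l * Pr e l (Suc i) k)"
  using Pr_nonneg[OF el1] l0 by (intro sum_nonneg) simp

lemma sgd_abstract:
  fixes DD :: "nat \<Rightarrow> nat \<Rightarrow> ennreal" and lam eta :: "nat \<Rightarrow> real"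
  assumes lam0: "\<And>j. 0 \<le> lam j" and lsum: "summable lam"
    and eta0: "\<And>k. 0 \<le> eta k" and etac: "\<And>k. eta k \<le> c0" and el1: "\<And>j k. eta k * lam j \<le> 1"
    and C0: "0 \<le> C" and cT: "C * c0 * (\<Sum>j. lam j) \<le> 1/2"
    and rec: "\<And>j k. DD j (Suc k) \<le> ennreal (1 - eta k * lam j) * DD j k
         + ennreal ((eta k)\<^sup>2) * (ennreal C * ennreal (lam j) * (\<Sum>i. ennreal (lam i) * DD i k))
         + ennreal ((eta k)\<^sup>2 * sg\<^sup>2) * ennreal (lam j)"
  shows "(\<Sum>j. ennreal (lam j) * DD j N) \<le> (\<Sum>j. ennreal (lam j * Pr eta (lam j) 0 N) * DD j 0)
      + 2 * (ennreal C * (\<Sum>j. ennreal (lam j) * DD j 0) + ennreal (sg\<^sup>2))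
          * (\<Sum>j. ennreal (lam j * (\<Sum>i<N. (eta i)\<^sup>2 * lam j * Pr eta (lam j) (Suc i) N)))"
proof -
  define W where "W k = (\<Sum>i. ennreal (lam i) * DD i k)" for k
  define V where "V k = ennreal C * W k + ennreal (sg\<^sup>2)" for k
  define B where "B = (\<Sum>j. ennreal (lam j) * DD j 0)"
  define K0 where "K0 = ennreal C * B + ennreal (sg\<^sup>2)"
  define H where "H j k = (\<Sum>i<k. (eta i)\<^sup>2 * lam j * Pr eta (lam j) (Suc i) k)" for j k
  have H0: "0 \<le> H j k" for j k unfolding H_def by (rule H_nonneg[OF el1 lam0])
  have Hc: "H j k \<le> c0" for j k unfolding H_def by (rule H_le[OF el1 lam0 eta0 etac])
  have rec': "DD j (Suc k) \<le> ennreal (1 - eta k * lam j) * DD j k + ennreal ((eta k)\<^sup>2 * lam j) * V k" for j k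
  proof -
    have "ennreal ((eta k)\<^sup>2) * (ennreal C * ennreal (lam j) * W k) + ennreal ((eta k)\<^sup>2 * sg\<^sup>2) * ennreal (lam j)
        = ennreal ((eta k)\<^sup>2 * lam j) * V k"
      unfolding V_def using lam0[of j]
      by (simp add: ennreal_mult distrib_left mult_ac)
    then show ?thesis using rec[of j k] unfolding W_def by (simp add: add.assoc)
  qed
  have unr: "DD j k \<le> ennreal (Pr eta (lam j) 0 k) * DD j 0 + (\<Sum>i<k. ennreal ((eta i)\<^sup>2 * lam j * Pr eta (lam j) (Suc i) k) * V i)" for j k
    by (rule unroll[where D="\<lambda>k. DD j k"]) (use el1 lam0 rec' in auto)
  have Wb: "W k \<le> (\<Sum>j. ennreal (lam j * Pr eta (lam j) 0 k) * DD j 0) + (\<Sum>j. ennreal (lam j * H j k)) * M"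
    if VM: "\<And>i. i < k \<Longrightarrow> V i \<le> M" for k M
  proof -
    have "W k \<le> (\<Sum>j. ennreal (lam j * Pr eta (lam j) 0 k) * DD j 0 + ennreal (lam j * H j k) * M)"
      unfolding W_def
    proof (intro suminf_le allI)
      fix j
      have "ennreal (lam j) * DD j k \<le> ennreal (lam j) * (ennreal (Pr eta (lam j) 0 k) * DD j 0
            + (\<Sum>i<k. ennreal ((eta i)\<^sup>2 * lam j * Pr eta (lam j) (Suc i) k) * V i))"
        by (intro mult_left_mono unr) simp
      also have "\<dots> \<le> ennreal (lam j) * (ennreal (Pr eta (lam j) 0 k) * DD j 0
            + (\<Sum>i<k. ennreal ((eta i)\<^sup>2 * lam j * Pr eta (lam j) (Suc i) k) * M))"
        by (intro mult_left_mono add_mono order.refl sum_mono) (auto intro: VM)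
      also have "\<dots> = ennreal (lam j * Pr eta (lam j) 0 k) * DD j 0 + ennreal (lam j * H j k) * M"
      proof -
        have c0': "0 \<le> (eta i)\<^sup>2 * lam j * Pr eta (lam j) (Suc i) k" for i
          using lam0[of j] Pr_nonneg[OF el1] by simp
        have "(\<Sum>i<k. ennreal ((eta i)\<^sup>2 * lam j * Pr eta (lam j) (Suc i) k) * M)
            = (\<Sum>i<k. ennreal ((eta i)\<^sup>2 * lam j * Pr eta (lam j) (Suc i) k)) * M"
          by (simp add: sum_distrib_right)
        also have "\<dots> = ennreal (H j k) * M"
          unfolding H_def using c0' by (subst sum_ennreal) auto
        finally have s1: "(\<Sum>i<k. ennreal ((eta i)\<^sup>2 * lam j * Pr eta (lam j) (Suc i) k) * M) = ennreal (H j k) * M" .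
        have p0: "0 \<le> Pr eta (lam j) 0 k" by (rule Pr_nonneg[OF el1])
        show ?thesis unfolding s1 using lam0[of j] p0 H0[of j k]
          by (simp add: distrib_left ennreal_mult mult_ac)
      qed
      finally show "ennreal (lam j) * DD j k \<le> ennreal (lam j * Pr eta (lam j) 0 k) * DD j 0 + ennreal (lam j * H j k) * M" .
    qed auto
    also have "\<dots> = (\<Sum>j. ennreal (lam j * Pr eta (lam j) 0 k) * DD j 0) + (\<Sum>j. ennreal (lam j * H j k)) * M"
      by (simp add: suminf_add[symmetric] ennreal_suminf_multc)
    finally show ?thesis .
  qed
  have sumH: "(\<Sum>j. ennreal (lam j * H j k)) \<le> ennreal (c0 * (\<Sum>j. lam j))" for k
  proof -
    have "(\<Sum>j. ennreal (lam j * H j k)) \<le> (\<Sum>j. ennreal (c0 * lam j))"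
    proof (intro suminf_le allI ennreal_leI)
      fix j
      show "lam j * H j k \<le> c0 * lam j" using mult_left_mono[OF Hc[of j k] lam0[of j]] by (simp add: mult.commute)
    qed auto
    also have "\<dots> = ennreal (c0 * (\<Sum>j. lam j))"
      using lsum lam0 etac[of 0] eta0[of 0]
      by (subst suminf_ennreal2) (auto intro: summable_mult simp: suminf_mult)
    finally show ?thesis .
  qed
  have B1: "(\<Sum>j. ennreal (lam j * Pr eta (lam j) 0 k) * DD j 0) \<le> B" for k
    unfolding B_def
    using lam0 Pr_le1[OF el1] el1 eta0 lam0
    by (intro suminf_le allI mult_right_mono ennreal_leI) (auto intro!: mult_left_le simp: mult_nonneg_nonneg)
  have VM: "V k \<le> 2 * K0" for k
  proof (induction k rule: less_induct)
    case (less k)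
    have "W k \<le> B + ennreal (c0 * (\<Sum>j. lam j)) * (2 * K0)"
      using Wb[of k "2 * K0", OF less] B1[of k] sumH[of k] by (meson add_mono mult_right_mono order.trans zero_le)
    then have "V k \<le> ennreal C * (B + ennreal (c0 * (\<Sum>j. lam j)) * (2 * K0)) + ennreal (sg\<^sup>2)"
      unfolding V_def by (intro add_mono mult_left_mono) auto
    also have "\<dots> = K0 + ennreal (C * (c0 * (\<Sum>j. lam j))) * (2 * K0)"
    proof -
      have X0: "0 \<le> c0 * (\<Sum>j. lam j)"
        using etac[of 0] eta0[of 0] lam0 lsum by (intro mult_nonneg_nonneg suminf_nonneg) auto
      have e: "ennreal (C * (c0 * (\<Sum>j. lam j))) = ennreal C * ennreal (c0 * (\<Sum>j. lam j))"
        by (rule ennreal_mult[OF C0 X0])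
      have g: "ennreal C * (B + Y) + s = (ennreal C * B + s) + ennreal C * Y" for Y s :: ennreal
        by (simp add: distrib_left add_ac)
      show ?thesis unfolding g K0_def[symmetric] e by (simp add: mult_ac)
    qed
    also have "\<dots> \<le> K0 + ennreal (1/2) * (2 * K0)"
      using cT by (intro add_mono mult_right_mono ennreal_leI) (auto simp: mult_ac)
    also have "\<dots> = 2 * K0"
    proof -
      have h: "ennreal (1/2) * 2 = 1" using ennreal_mult[of "1/2::real" 2, symmetric] by simp
      have "K0 + ennreal (1/2) * (2 * K0) = K0 + (ennreal (1/2) * 2) * K0" by (simp only: mult.assoc)
      also have "\<dots> = 2 * K0" unfolding h by (simp add: mult_2)
      finally show ?thesis .
    qed
    finally show ?case .
  qed
  have "W N \<le> (\<Sum>j. ennreal (lam j * Pr eta (lam j) 0 N) * DD j 0) + (\<Sum>j. ennreal (lam j * H j N)) * (2 * K0)"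
    using Wb[of N "2 * K0"] VM by blast
  then show ?thesis unfolding W_def K0_def B_def H_def by (simp add: mult_ac)
qed

lemma tail_lower:
  fixes N l :: nat and g :: real
  assumes lN: "l \<le> N" and g0: "0 \<le> g"
  shows "(\<Sum>m\<in>{l..<N}. (1 - real m / real N) powr g) \<ge> (real (N - l) / 2) * ((real (N - l) / 2) / real N) powr g"
proof -
  define n where "n = N - l"
  define Q where "Q = {l..<l + (n - n div 2)}"
  have QS: "Q \<subseteq> {l..<N}" unfolding Q_def n_def by auto
  have Qb: "(1 - real m / real N) powr g \<ge> ((real n / 2) / real N) powr g" if m: "m \<in> Q" for m
  proof (rule powr_mono2[OF g0])
    show "0 \<le> real n / 2 / real N" by simp
    from m have "m < N" "N - m \<ge> n div 2 + 1" unfolding Q_def n_def by auto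
    then have "real N - real m \<ge> real n / 2" by linarith
    moreover have "real N > 0" using \<open>m < N\<close> by simp
    ultimately show "real n / 2 / real N \<le> 1 - real m / real N"
      by (simp add: field_simps)
  qed
  have "(\<Sum>m\<in>{l..<N}. (1 - real m / real N) powr g) \<ge> (\<Sum>m\<in>Q. (1 - real m / real N) powr g)"
    by (rule sum_mono2[OF _ QS]) auto
  moreover have "(\<Sum>m\<in>Q. (1 - real m / real N) powr g) \<ge> (\<Sum>m\<in>Q. ((real n / 2) / real N) powr g)"
    by (rule sum_mono) (rule Qb)
  moreover have "(\<Sum>m\<in>Q. ((real n / 2) / real N) powr g) = real (n - n div 2) * ((real n / 2) / real N) powr g"
    unfolding Q_def by simp
  moreover have "real (n - n div 2) \<ge> real n / 2" by linarith
  ultimately show ?thesis unfolding n_def[symmetric]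
    by (smt (verit, best) mult_right_mono powr_ge_zero)
qed

lemma exp_neg_le: "0 < (y::real) \<Longrightarrow> exp (- y) \<le> 4 / y\<^sup>2"
proof -
  assume y: "0 < y"
  have "1 + y / 2 \<le> exp (y / 2)" by (rule exp_ge_add_one_self)
  then have "(y / 2)\<^sup>2 \<le> (exp (y / 2))\<^sup>2" using y by (intro power_mono) linarith+
  also have "(exp (y / 2))\<^sup>2 = exp y" by (simp add: power2_eq_square exp_add[symmetric])
  finally have "y\<^sup>2 \<le> 4 * exp y" by (simp add: power_divide)
  then show ?thesis using y by (simp add: exp_minus field_simps)
qed

lemma inv_sq_tail:
  fixes b :: nat assumes b1: "1 \<le> b"
  shows "(\<Sum>n\<in>{1..<N}. if b < n then 1 / (real n)\<^sup>2 else 0) \<le> 1 / real b - 1 / real (max b (N - 1))"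
proof (induction N)
  case 0 then show ?case by simp
next
  case (Suc N)
  show ?case
  proof (cases "N = 0")
    case True then show ?thesis by simp
  next
    case False
    then have "{1..<Suc N} = insert N {1..<N}" by auto
    then have eq: "(\<Sum>n\<in>{1..<Suc N}. if b < n then 1 / (real n)\<^sup>2 else 0)
        = (if b < N then 1 / (real N)\<^sup>2 else 0) + (\<Sum>n\<in>{1..<N}. if b < n then 1 / (real n)\<^sup>2 else 0)"
      by simp
    show ?thesis
    proof (cases "b < N")
      case True
      then have m1: "max b (N - 1) = N - 1" "max b (Suc N - 1) = N" by auto
      have N2: "real N \<ge> 2" using True b1 by linarith
      have "1 / (real N)\<^sup>2 \<le> 1 / real (N - 1) - 1 / real N"
      proof -
        have "real (N - 1) = real N - 1" using False by simp
        moreover have "1 / (real N)\<^sup>2 \<le> 1 / (real N - 1) - 1 / real N"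
          using N2 by (simp add: field_simps power2_eq_square)
        ultimately show ?thesis by simp
      qed
      then show ?thesis using Suc.IH unfolding eq m1 using True by simp
    next
      case False
      then have "max b (N - 1) = b" "max b (Suc N - 1) = b" by auto
      then show ?thesis using Suc.IH False unfolding eq by simp
    qed
  qed
qed


lemma term2:
  fixes x M0 g :: real assumes x: "0 < x" and M0: "0 < M0" and g: "0 \<le> g"
  shows "x powr (2*g) * exp (- ((x / M0) powr (g+1))) \<le> 4 * M0 powr (2*g+2) / x\<^sup>2"
proof -
  define y where "y = (x / M0) powr (g+1)"
  have y0: "0 < y" unfolding y_def using x M0 by simp
  have y2: "y\<^sup>2 = x powr (2*g+2) / M0 powr (2*g+2)"
    unfolding y_def using x M0
    by (simp add: power2_eq_square powr_add[symmetric] powr_divide algebra_simps)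
  have xp: "x powr (2*g+2) = x powr (2*g) * x\<^sup>2"
    using x by (simp add: powr_add power2_eq_square)
  have "x powr (2*g) * exp (- y) \<le> x powr (2*g) * (4 / y\<^sup>2)"
    by (intro mult_left_mono exp_neg_le y0) simp
  also have "\<dots> = 4 * M0 powr (2*g+2) / x\<^sup>2"
    unfolding y2 xp using x M0 by (simp add: field_simps)
  finally show ?thesis unfolding y_def .
qed

lemma key_sum:
  fixes M0 g :: real assumes M0: "0 < M0" and g: "0 \<le> g"
  shows "(\<Sum>n\<in>{1..<N}. real n powr (2*g) * exp (- ((real n / M0) powr (g+1)))) \<le> 9 * M0 powr (2*g+1)"
proof -
  define F where "F n = real n powr (2*g) * exp (- ((real n / M0) powr (g+1)))" for n :: nat
  define a where "a = nat \<lfloor>M0\<rfloor>"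
  have aM: "real a \<le> M0" unfolding a_def using M0 by linarith
  have aM2: "M0 < real a + 1" unfolding a_def using M0 by linarith
  have F0: "0 \<le> F n" for n unfolding F_def by simp
  have Ft: "F n \<le> 4 * M0 powr (2*g+2) * (1 / (real n)\<^sup>2)" if "1 \<le> n" for n
    using term2[of "real n" M0 g] that M0 g unfolding F_def by simp
  have Fh: "F n \<le> M0 powr (2*g)" if "n \<le> a" for n
  proof -
    have "F n \<le> real n powr (2*g) * 1" unfolding F_def by (intro mult_left_mono) auto
    also have "\<dots> \<le> M0 powr (2*g)" using that aM g by (simp add: powr_mono2)
    finally show ?thesis .
  qed
  show ?thesis
  proof (cases "a = 0")
    case True
    then have M01: "M0 < 1" using aM2 by simp
    have "(\<Sum>n\<in>{1..<N}. F n) \<le> (\<Sum>n\<in>{1..<N}. 4 * M0 powr (2*g+2) * (1 / (real n)\<^sup>2))"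
      by (intro sum_mono Ft) auto
    also have "\<dots> = 4 * M0 powr (2*g+2) * (\<Sum>n\<in>{1..<N}. 1 / (real n)\<^sup>2)"
      by (simp add: sum_distrib_left)
    also have "(\<Sum>n\<in>{1..<N}. 1 / (real n)\<^sup>2) \<le> 2"
    proof -
      have "(\<Sum>n\<in>{1..<N}. 1 / (real n)\<^sup>2) = (\<Sum>n\<in>{1..<N}. (if n = 1 then 1 else 0) + (if 1 < n then 1 / (real n)\<^sup>2 else 0))"
        by (intro sum.cong) auto
      also have "\<dots> = (\<Sum>n\<in>{1..<N}. (if n = 1 then 1 else 0)) + (\<Sum>n\<in>{1..<N}. if 1 < n then 1 / (real n)\<^sup>2 else 0)"
        by (rule sum.distrib)
      also have "(\<Sum>n\<in>{1..<N}. (if n = 1 then 1 else 0::real)) \<le> 1"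
        by (simp add: sum.delta)
      also have "(\<Sum>n\<in>{1..<N}. if 1 < n then 1 / (real n)\<^sup>2 else 0) \<le> 1 / real (1::nat) - 1 / real (max 1 (N - 1))"
        by (rule inv_sq_tail) simp
      also have "\<dots> \<le> 1" by simp
      finally show ?thesis by simp
    qed
    then have "4 * M0 powr (2*g+2) * (\<Sum>n\<in>{1..<N}. 1 / (real n)\<^sup>2) \<le> 4 * M0 powr (2*g+2) * 2"
      by (intro mult_left_mono) auto
    also have "\<dots> \<le> 8 * M0 powr (2*g+1)"
      using M0 M01 by (simp add: powr_mono')
    finally have "(\<Sum>n\<in>{1..<N}. F n) \<le> 8 * M0 powr (2*g+1)" .
    moreover have "0 \<le> M0 powr (2*g+1)" by simp
    ultimately show ?thesis unfolding F_def by linarith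
  next
    case False
    then have a1: "1 \<le> a" by simp
    have split: "F n \<le> (if n \<le> a then M0 powr (2*g) else 0) + 4 * M0 powr (2*g+2) * (if a < n then 1 / (real n)\<^sup>2 else 0)"
      if "n \<in> {1..<N}" for n
      using that Fh Ft by (cases "n \<le> a") auto
    have "(\<Sum>n\<in>{1..<N}. F n) \<le> (\<Sum>n\<in>{1..<N}. (if n \<le> a then M0 powr (2*g) else 0) + 4 * M0 powr (2*g+2) * (if a < n then 1 / (real n)\<^sup>2 else 0))"
      by (rule sum_mono) (rule split)
    also have "\<dots> = (\<Sum>n\<in>{1..<N}. (if n \<le> a then M0 powr (2*g) else 0))
        + 4 * M0 powr (2*g+2) * (\<Sum>n\<in>{1..<N}. (if a < n then 1 / (real n)\<^sup>2 else 0))"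
      by (simp only: sum.distrib sum_distrib_left)
    also have "(\<Sum>n\<in>{1..<N}. (if n \<le> a then M0 powr (2*g) else 0)) \<le> (\<Sum>n\<in>{1..a}. M0 powr (2*g))"
    proof -
      have "(\<Sum>n\<in>{1..<N}. (if n \<le> a then M0 powr (2*g) else 0)) = (\<Sum>n\<in>{1..<N} \<inter> {..a}. M0 powr (2*g))"
        by (subst sum.inter_restrict) (auto simp: atMost_iff)
      also have "\<dots> \<le> (\<Sum>n\<in>{1..a}. M0 powr (2*g))"
        by (intro sum_mono2) auto
      finally show ?thesis .
    qed
    also have "(\<Sum>n\<in>{1..a}. M0 powr (2*g)) \<le> M0 * M0 powr (2*g)"
      using aM by (simp add: mult_right_mono)
    also have "(\<Sum>n\<in>{1..<N}. (if a < n then 1 / (real n)\<^sup>2 else 0)) \<le> 1 / real a - 1 / real (max a (N - 1))"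
      by (rule inv_sq_tail[OF a1])
    also have "\<dots> \<le> 2 / M0"
    proof -
      have "1 / real a \<le> 2 / M0" using aM2 a1 M0 by (simp add: field_simps)
      then show ?thesis by (smt (verit) divide_nonneg_nonneg of_nat_0_le_iff)
    qed
    finally have "(\<Sum>n\<in>{1..<N}. F n) \<le> M0 * M0 powr (2*g) + 4 * M0 powr (2*g+2) * (2 / M0)"
      by (simp add: mult_left_mono)
    also have "\<dots> = 9 * M0 powr (2*g+1)"
    proof -
      have "M0 * M0 powr (2*g) = M0 powr (2*g+1)" using M0 by (simp add: powr_add)
      moreover have "M0 powr (2*g+2) = M0 powr (2*g+1) * M0"
        using M0 powr_add[of M0 "2*g+1" 1] by (simp add: add.assoc)
      ultimately show ?thesis using M0 by (simp add: field_simps)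
    qed
    finally show ?thesis unfolding F_def .
  qed
qed

definition sched :: "real \<Rightarrow> real \<Rightarrow> nat \<Rightarrow> nat \<Rightarrow> real" where
  "sched eta0 g N k = (if k < N then eta0 * (1 - real k / real N) powr g else 0)"

lemma sched_nonneg: "0 \<le> eta0 \<Longrightarrow> 0 \<le> sched eta0 g N k"
  unfolding sched_def by simp

lemma sched_le: "0 \<le> eta0 \<Longrightarrow> 0 \<le> g \<Longrightarrow> sched eta0 g N k \<le> eta0"
proof -
  assume e: "0 \<le> eta0" and g: "0 \<le> g"
  show ?thesis
  proof (cases "k < N")
    case True
    have "(1 - real k / real N) powr g \<le> 1"
      using True g powr_mono2[of g "1 - real k / real N" 1] by (auto simp: field_simps)
    then show ?thesis using True e by (simp add: sched_def mult_left_le)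
  next
    case False then show ?thesis using e by (simp add: sched_def)
  qed
qed

lemma ln_identity:
  fixes x N g :: real assumes x: "0 < x" and N: "0 < N" and g: "0 \<le> g"
  shows "(x / N)\<^sup>2 * N powr (-2*g) * (2 * N / x powr (1/(g+1))) powr (2*g+1) = 2 powr (2*g+1) * x powr (1/(g+1)) / N"
proof -
  have l: "ln ((x / N)\<^sup>2 * N powr (-2*g) * (2 * N / x powr (1/(g+1))) powr (2*g+1))
      = 2 * (ln x - ln N) + (-2*g) * ln N + (2*g+1) * (ln 2 + ln N - (1/(g+1)) * ln x)"
    using x N by (simp add: ln_mult ln_div ln_powr power2_eq_square)
  have r: "ln (2 powr (2*g+1) * x powr (1/(g+1)) / N) = (2*g+1) * ln 2 + (1/(g+1)) * ln x - ln N"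
    using x N by (simp add: ln_mult ln_div ln_powr)
  have "2 * (ln x - ln N) + (-2*g) * ln N + (2*g+1) * (ln 2 + ln N - (1/(g+1)) * ln x)
      = (2*g+1) * ln 2 + (1/(g+1)) * ln x - ln N"
    using g by (simp add: field_simps)
  then have "ln ((x / N)\<^sup>2 * N powr (-2*g) * (2 * N / x powr (1/(g+1))) powr (2*g+1)) = ln (2 powr (2*g+1) * x powr (1/(g+1)) / N)"
    using l r by simp
  then show ?thesis using x N by (subst (asm) ln_inj_iff) auto
qed


lemma exponent_identity:
  fixes x N n g lam eta0 :: real
  assumes x: "0 < x" and N: "0 < N" and n: "0 < n" and g: "0 \<le> g" and xd: "x = lam * eta0 * N"
  shows "lam * eta0 * ((n / 2) * ((n / 2) / N) powr g) = (n / (2 * N / x powr (1/(g+1)))) powr (g+1)"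
proof -
  have l: "ln (lam * eta0 * ((n / 2) * ((n / 2) / N) powr g)) = ln x - ln N + (ln n - ln 2) + g * (ln n - ln 2 - ln N)"
  proof -
    have "lam * eta0 = x / N" using xd N by simp
    then have "lam * eta0 * ((n / 2) * ((n / 2) / N) powr g) = (x / N) * ((n / 2) * ((n / 2) / N) powr g)" by simp
    then show ?thesis using x N n by (simp add: ln_mult ln_div ln_powr)
  qed
  have r: "ln ((n / (2 * N / x powr (1/(g+1)))) powr (g+1)) = (g+1) * (ln n - ln 2 - ln N + (1/(g+1)) * ln x)"
    using x N n by (simp add: ln_mult ln_div ln_powr)
  have "ln x - ln N + (ln n - ln 2) + g * (ln n - ln 2 - ln N) = (g+1) * (ln n - ln 2 - ln N + (1/(g+1)) * ln x)"
    using g by (simp add: field_simps)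
  then have eqln: "ln (lam * eta0 * ((n / 2) * ((n / 2) / N) powr g)) = ln ((n / (2 * N / x powr (1/(g+1)))) powr (g+1))"
    by (simp only: l r)
  have le0: "0 < lam * eta0" using xd x N by (simp add: zero_less_mult_iff)
  have Lp: "0 < lam * eta0 * ((n / 2) * ((n / 2) / N) powr g)" using le0 n N by simp
  have Rp: "0 < (n / (2 * N / x powr (1/(g+1)))) powr (g+1)" using n N x by simp
  show ?thesis using eqln ln_inj_iff[OF Lp Rp] by simp
qed

definition Kv :: "real \<Rightarrow> real" where "Kv g = 1 + 9 * 2 powr (2*g) * 2 powr (2*g+1)"

lemma var_lam:
  fixes N :: nat and eta0 g lam :: real
  assumes N1: "1 \<le> N" and g: "0 \<le> g" and e0: "0 < eta0" and l0: "0 \<le> lam" and el: "eta0 * lam \<le> 1"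
  shows "lam * (\<Sum>i<N. (sched eta0 g N i)\<^sup>2 * lam * Pr (sched eta0 g N) lam (Suc i) N)
       \<le> Kv g * (lam * eta0 * real N) powr (1/(g+1)) / real N"
proof (cases "lam = 0")
  case True then show ?thesis by (simp add: Kv_def)
next
  case False
  then have lp: "0 < lam" using l0 by simp
  define e where "e = sched eta0 g N"
  define x where "x = lam * eta0 * real N"
  define p where "p = 1 / (g + 1)"
  define M0 where "M0 = 2 * real N / x powr p"
  have RN: "0 < real N" using N1 by simp
  have xp: "0 < x" unfolding x_def using lp e0 RN by simp
  have M0p: "0 < M0" unfolding M0_def using RN xp by simp
  have e_nn: "0 \<le> e k" for k unfolding e_def using e0 by (simp add: sched_nonneg)
  have e_le: "e k \<le> eta0" for k unfolding e_def using e0 g by (simp add: sched_le)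
  have el1: "e k * lam \<le> 1" for k using mult_right_mono[OF e_le[of k] l0] el by simp
  define G where "G n = lam\<^sup>2 * eta0\<^sup>2 * ((real n + 1) / real N) powr (2*g) * exp (- ((real n / M0) powr (g+1)))" for n :: nat
  have termb: "lam * ((e i)\<^sup>2 * lam * Pr e lam (Suc i) N) \<le> G (N - Suc i)" if iN: "i < N" for i
  proof -
    define n where "n = N - Suc i"
    have nreal: "real n + 1 = real N - real i" unfolding n_def using iN by linarith
    have ei: "e i = eta0 * ((real n + 1) / real N) powr g"
    proof -
      have "1 - real i / real N = (real n + 1) / real N" using RN nreal by (simp add: field_simps)
      then show ?thesis unfolding e_def sched_def using iN by simp
    qed
    have sumeq: "(\<Sum>m\<in>{Suc i..<N}. e m) = eta0 * (\<Sum>m\<in>{Suc i..<N}. (1 - real m / real N) powr g)"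
      unfolding e_def sched_def sum_distrib_left by (intro sum.cong) auto
    have low: "(\<Sum>m\<in>{Suc i..<N}. (1 - real m / real N) powr g) \<ge> (real n / 2) * ((real n / 2) / real N) powr g"
      using tail_lower[of "Suc i" N g] iN g unfolding n_def by simp
    have expo: "lam * (\<Sum>m\<in>{Suc i..<N}. e m) \<ge> (real n / M0) powr (g+1)"
    proof (cases "n = 0")
      case True then show ?thesis using e_nn l0 by (simp add: sum_nonneg)
    next
      case False
      have "(real n / M0) powr (g+1) = lam * eta0 * ((real n / 2) * ((real n / 2) / real N) powr g)"
        unfolding M0_def p_def using exponent_identity[OF xp RN _ g x_def, of "real n"] False by simp
      also have "\<dots> \<le> lam * (\<Sum>m\<in>{Suc i..<N}. e m)"
        unfolding sumeq using low lp e0 by (simp add: mult.assoc mult_left_mono)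
      finally show ?thesis .
    qed
    have Pb: "Pr e lam (Suc i) N \<le> exp (- ((real n / M0) powr (g+1)))"
    proof -
      have "exp (- lam * (\<Sum>m\<in>{Suc i..<N}. e m)) \<le> exp (- ((real n / M0) powr (g+1)))"
        using expo by simp
      then show ?thesis using Pr_exp[where e=e and l=lam and a="Suc i" and b=N, OF el1] by linarith
    qed
    have eisq: "(e i)\<^sup>2 = eta0\<^sup>2 * ((real n + 1) / real N) powr (2*g)"
    proof -
      have "(((real n + 1) / real N) powr g)\<^sup>2 = ((real n + 1) / real N) powr g * ((real n + 1) / real N) powr g"
        by (simp add: power2_eq_square)
      also have "\<dots> = ((real n + 1) / real N) powr (g + g)" by (simp only: powr_add)
      also have "g + g = 2 * g" by simp
      finally show ?thesis unfolding ei by (simp add: power_mult_distrib)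
    qed
    have "lam * ((e i)\<^sup>2 * lam * Pr e lam (Suc i) N) = lam\<^sup>2 * (e i)\<^sup>2 * Pr e lam (Suc i) N"
      by (simp add: power2_eq_square mult_ac)
    also have "\<dots> \<le> lam\<^sup>2 * (e i)\<^sup>2 * exp (- ((real n / M0) powr (g+1)))"
      by (intro mult_left_mono Pb) simp
    also have "\<dots> = G n" unfolding G_def eisq by (simp add: mult_ac)
    finally show ?thesis unfolding n_def .
  qed
  have "lam * (\<Sum>i<N. (e i)\<^sup>2 * lam * Pr e lam (Suc i) N) = (\<Sum>i<N. lam * ((e i)\<^sup>2 * lam * Pr e lam (Suc i) N))"
    by (simp add: sum_distrib_left)
  also have "\<dots> \<le> (\<Sum>i<N. G (N - Suc i))" by (intro sum_mono termb) simp
  also have "\<dots> = (\<Sum>n<N. G n)" by (rule sum.nat_diff_reindex)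
  also have "\<dots> = G 0 + (\<Sum>n\<in>{1..<N}. G n)"
  proof -
    have "{..<N} = insert 0 {1..<N}" using N1 by auto
    then show ?thesis by simp
  qed
  also have "(\<Sum>n\<in>{1..<N}. G n) \<le> (\<Sum>n\<in>{1..<N}. (lam\<^sup>2 * eta0\<^sup>2 * 2 powr (2*g) * real N powr (-2*g)) * (real n powr (2*g) * exp (- ((real n / M0) powr (g+1)))))"
  proof (intro sum_mono)
    fix n assume "n \<in> {1..<N}"
    then have n1: "1 \<le> real n" by simp
    have "((real n + 1) / real N) powr (2*g) \<le> (2 * real n / real N) powr (2*g)"
      using n1 RN g by (intro powr_mono2) (auto simp: field_simps)
    also have "\<dots> = (2 * real n) powr (2*g) / real N powr (2*g)"
      using n1 RN by (intro powr_divide; auto)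
    also have "(2 * real n) powr (2*g) = 2 powr (2*g) * real n powr (2*g)"
      using n1 by (intro powr_mult; auto)
    also have "2 powr (2*g) * real n powr (2*g) / real N powr (2*g) = 2 powr (2*g) * real n powr (2*g) * real N powr (-2*g)"
      by (simp add: powr_minus divide_inverse)
    finally have "((real n + 1) / real N) powr (2*g) \<le> 2 powr (2*g) * real n powr (2*g) * real N powr (-2*g)" .
    then have "lam\<^sup>2 * eta0\<^sup>2 * ((real n + 1) / real N) powr (2*g) * exp (- ((real n / M0) powr (g+1)))
        \<le> lam\<^sup>2 * eta0\<^sup>2 * (2 powr (2*g) * real n powr (2*g) * real N powr (-2*g)) * exp (- ((real n / M0) powr (g+1)))"
      by (intro mult_right_mono mult_left_mono) auto
    then show "G n \<le> (lam\<^sup>2 * eta0\<^sup>2 * 2 powr (2*g) * real N powr (-2*g)) * (real n powr (2*g) * exp (- ((real n / M0) powr (g+1))))"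
      unfolding G_def by (simp only: mult_ac)
  qed
  also have "\<dots> = (lam\<^sup>2 * eta0\<^sup>2 * 2 powr (2*g) * real N powr (-2*g)) * (\<Sum>n\<in>{1..<N}. real n powr (2*g) * exp (- ((real n / M0) powr (g+1))))"
    by (simp add: sum_distrib_left)
  also have "\<dots> \<le> (lam\<^sup>2 * eta0\<^sup>2 * 2 powr (2*g) * real N powr (-2*g)) * (9 * M0 powr (2*g+1))"
    by (intro mult_left_mono key_sum M0p g) simp
  also have "(lam\<^sup>2 * eta0\<^sup>2 * 2 powr (2*g) * real N powr (-2*g)) * (9 * M0 powr (2*g+1))
      = 9 * 2 powr (2*g) * ((x / real N)\<^sup>2 * real N powr (-2*g) * M0 powr (2*g+1))"
    unfolding x_def using RN by (simp add: power_mult_distrib field_simps)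
  also have "(x / real N)\<^sup>2 * real N powr (-2*g) * M0 powr (2*g+1) = 2 powr (2*g+1) * x powr p / real N"
    unfolding M0_def p_def by (rule ln_identity[OF xp RN g])
  also have "G 0 \<le> x powr p / real N"
  proof -
    have xN: "x / real N \<le> 1" unfolding x_def using RN el by (simp add: mult_ac)
    have xN0: "0 < x / real N" using xp RN by simp
    have p2: "p \<le> 2" "0 < p" unfolding p_def using g by (auto simp: field_simps)
    have G0: "G 0 = (x / real N)\<^sup>2 * real N powr (-2*g)"
      unfolding G_def x_def using RN by (simp add: powr_minus powr_divide field_simps power_mult_distrib)
    have a: "(x / real N)\<^sup>2 \<le> (x / real N) powr p"
    proof -
      have "(x / real N)\<^sup>2 = (x / real N) powr 2" using xN0 by (simp add: powr_realpow)
      also have "\<dots> \<le> (x / real N) powr p" using xN xN0 p2 by (intro powr_mono'; auto)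
      finally show ?thesis .
    qed
    have b: "real N powr (-2*g) \<le> real N powr (p - 1)"
    proof (rule powr_mono)
      show "-2*g \<le> p - 1" unfolding p_def using g by (simp add: field_simps)
    qed (use N1 in simp)
    have "G 0 \<le> (x / real N) powr p * real N powr (p - 1)"
      unfolding G0 by (intro mult_mono a b) auto
    also have "(x / real N) powr p * real N powr (p - 1) = x powr p / real N"
      using xp RN by (simp add: powr_divide powr_diff)
    finally show ?thesis .
  qed
  finally have "lam * (\<Sum>i<N. (e i)\<^sup>2 * lam * Pr e lam (Suc i) N) \<le> x powr p / real N + 9 * 2 powr (2*g) * (2 powr (2*g+1) * x powr p / real N)"
    by simp
  also have "\<dots> = Kv g * x powr p / real N" using RN unfolding Kv_def by (simp add: field_simps)
  finally show ?thesis unfolding e_def x_def p_def .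
qed

lemma bias_pt:
  fixes x S s :: real assumes x: "0 \<le> x" and S: "0 < S" and s: "0 < s"
  shows "x powr s * exp (- x * S) \<le> (s / S) powr s"
proof (cases "x = 0")
  case True then show ?thesis by simp
next
  case False
  then have xp: "0 < x" using x by simp
  define y where "y = x * S / s"
  have yp: "0 < y" unfolding y_def using xp S s by simp
  have xe: "x = (s / S) * y" unfolding y_def using S s by simp
  have ye: "y \<le> exp y" using exp_ge_add_one_self[of y] by linarith
  have "y powr s \<le> (exp y) powr s"
    using yp s ye by (intro powr_mono2) auto
  also have "(exp y) powr s = exp (x * S)" unfolding y_def using s by (simp add: powr_def)
  finally have ys: "y powr s \<le> exp (x * S)" .
  have xs: "x powr s = (s / S) powr s * y powr s"
    unfolding xe using S s yp by (intro powr_mult; auto)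
  have "x powr s * exp (- x * S) = (s / S) powr s * (y powr s * exp (- (x * S)))"
    unfolding xs by (simp add: mult_ac)
  also have "\<dots> \<le> (s / S) powr s"
  proof -
    have "y powr s * exp (- (x * S)) \<le> 1"
      using ys by (simp add: exp_minus field_simps)
    then show ?thesis by (simp add: mult_left_le)
  qed
  finally show ?thesis .
qed

lemma mvt_powr:
  fixes u w r :: real assumes u: "0 < u" and uw: "u < w"
  shows "\<exists>z. u < z \<and> z < w \<and> w powr r - u powr r = (w - u) * (r * z powr (r - 1))"
proof -
  have "\<And>x. u \<le> x \<Longrightarrow> x \<le> w \<Longrightarrow> ((\<lambda>t. t powr r) has_real_derivative r * x powr (r - 1)) (at x)"
    using u by (intro has_real_derivative_powr) auto
  from MVT2[OF uw this] show ?thesis by auto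
qed

lemma ps_low:
  fixes q :: real assumes q0: "0 \<le> q" and q1: "q < 1"
  shows "(\<Sum>j<J. (real j + 1) powr (-q)) \<le> real J powr (1 - q) / (1 - q)"
proof -
  define T where "T k = real k powr (1 - q) / (1 - q)" for k :: nat
  have t: "(real j + 1) powr (-q) \<le> T (Suc j) - T j" for j
  proof (cases "j = 0")
    case True then show ?thesis using q0 q1 by (simp add: T_def field_simps)
  next
    case False
    then have jp: "0 < real j" by simp
    obtain z where z: "real j < z" "z < real j + 1"
      and eq: "(real j + 1) powr (1 - q) - real j powr (1 - q) = ((real j + 1) - real j) * ((1 - q) * z powr (1 - q - 1))"
      using mvt_powr[OF jp, of "real j + 1" "1 - q"] by auto
    have "(real j + 1) powr (-q) \<le> z powr (-q)"
      using z jp q0 by (intro powr_mono2') auto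
    also have "z powr (-q) = (T (Suc j) - T j)"
    proof -
      have e2: "(real j + 1) powr (1 - q) - real j powr (1 - q) = (1 - q) * z powr (-q)"
        using eq by simp
      then have "z powr (-q) = ((real j + 1) powr (1 - q) - real j powr (1 - q)) / (1 - q)"
        using q1 by (simp add: field_simps)
      then show ?thesis unfolding T_def by (simp add: diff_divide_distrib add.commute)
    qed
    finally show ?thesis .
  qed
  have "(\<Sum>j<J. (real j + 1) powr (-q)) \<le> (\<Sum>j<J. T (Suc j) - T j)" by (intro sum_mono t)
  also have "\<dots> = T J - T 0" by (rule sum_lessThan_telescope)
  also have "\<dots> = real J powr (1 - q) / (1 - q)" by (simp add: T_def)
  finally show ?thesis .
qed

lemma summable_shift_powr:
  fixes b :: real assumes b: "1 < b"
  shows "summable (\<lambda>j. (real j + 1) powr (-b))"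
proof -
  have "summable (\<lambda>j. real j powr (-b))" using b by (simp add: summable_real_powr_iff)
  then have "summable (\<lambda>j. real (Suc j) powr (-b))" by (subst summable_Suc_iff)
  then show ?thesis by (simp add: add.commute)
qed

lemma ps_high:
  fixes b :: real and J :: nat assumes b: "1 < b" and J1: "1 \<le> J"
  shows "(\<Sum>j. (real (j + J) + 1) powr (-b)) \<le> real J powr (1 - b) / (b - 1)"
proof -
  define U where "U k = real k powr (1 - b) / (b - 1)" for k :: nat
  have t: "(real (j + J) + 1) powr (-b) \<le> U (j + J) - U (Suc (j + J))" for j
  proof -
    have jp: "0 < real (j + J)" using J1 by simp
    obtain z where z: "real (j + J) < z" "z < real (j + J) + 1"
      and eq: "(real (j + J) + 1) powr (1 - b) - real (j + J) powr (1 - b) = ((real (j + J) + 1) - real (j + J)) * ((1 - b) * z powr (1 - b - 1))"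
      using mvt_powr[OF jp, of "real (j + J) + 1" "1 - b"] by auto
    have "(real (j + J) + 1) powr (-b) \<le> z powr (-b)"
      using z jp b by (intro powr_mono2') auto
    also have "z powr (-b) = U (j + J) - U (Suc (j + J))"
    proof -
      have e2: "(real (j + J) + 1) powr (1 - b) - real (j + J) powr (1 - b) = (1 - b) * z powr (-b)"
        using eq by simp
      then have "(b - 1) * z powr (-b) = real (j + J) powr (1 - b) - (real (j + J) + 1) powr (1 - b)"
        by (simp add: algebra_simps)
      then have "z powr (-b) = (real (j + J) powr (1 - b) - (real (j + J) + 1) powr (1 - b)) / (b - 1)"
        using b by (simp add: field_simps)
      then show ?thesis unfolding U_def by (simp add: diff_divide_distrib add.commute)
    qed
    finally show ?thesis .
  qed
  have lim: "(\<lambda>n. U (n + J)) \<longlonglongrightarrow> 0"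
  proof -
    have "(\<lambda>n. real (n + J)) \<longlonglongrightarrow> \<infinity> \<or> True" by simp
    have f: "filterlim (\<lambda>n. real (n + J)) at_top sequentially"
      by (rule filterlim_at_top_mono[OF filterlim_real_sequentially always_eventually]) simp
    have "((\<lambda>n. real (n + J) powr (1 - b)) \<longlongrightarrow> 0) sequentially"
      using b by (intro tendsto_neg_powr f) auto
    then show ?thesis unfolding U_def by (intro tendsto_divide_zero)
  qed
  have sums: "(\<lambda>n. U (n + J) - U (Suc n + J)) sums (U (0 + J) - 0)"
    by (rule telescope_sums'[OF lim])
  have "(\<Sum>j. (real (j + J) + 1) powr (-b)) \<le> (\<Sum>j. U (j + J) - U (Suc (j + J)))"
  proof (rule suminf_le)
    show "summable (\<lambda>j. (real (j + J) + 1) powr (-b))"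
    proof -
      have "summable (\<lambda>j. (\<lambda>j. (real j + 1) powr (-b)) (j + J))"
        using summable_iff_shift[of "\<lambda>j. (real j + 1) powr (-b)" J] summable_shift_powr[OF b] by blast
      then show ?thesis by simp
    qed
    show "summable (\<lambda>j. U (j + J) - U (Suc (j + J)))" using sums by (simp add: sums_summable)
  qed (rule t)
  also have "\<dots> = U J" using sums by (simp add: sums_iff)
  finally show ?thesis unfolding U_def .
qed

lemma y_pow_bound:
  fixes X b q :: real assumes y0: "0 \<le> y" and yX: "y \<le> X * (real j + 1) powr (-b)" and q: "0 \<le> q" and X0: "0 \<le> X"
  shows "y powr q \<le> X powr q * (real j + 1) powr (-b*q)"
proof -
  have "y powr q \<le> (X * (real j + 1) powr (-b)) powr q" using y0 yX q by (intro powr_mono2; auto)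
  also have "\<dots> = X powr q * ((real j + 1) powr (-b)) powr q" using X0 by (intro powr_mult; auto)
  also have "((real j + 1) powr (-b)) powr q = (real j + 1) powr (-b*q)" by (simp add: powr_powr)
  finally show ?thesis .
qed

lemma cap_sum_ii:
  fixes b q K X :: real and y :: "nat \<Rightarrow> real"
  assumes q0: "0 < q" and qb: "1 < q * b" and K0: "0 \<le> K" and X0: "0 \<le> X"
    and y0: "\<And>j. 0 \<le> y j" and yX: "\<And>j. y j \<le> X * (real j + 1) powr (-b)"
  shows "summable (\<lambda>j. K * y j powr q) \<and> (\<Sum>j. K * y j powr q) \<le> K * X powr q * (\<Sum>j. (real j + 1) powr (-(b*q)))"
proof -
  have s: "summable (\<lambda>j. (real j + 1) powr (-(b*q)))" using qb by (intro summable_shift_powr) (simp add: mult.commute)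
  have le: "K * y j powr q \<le> K * X powr q * (real j + 1) powr (-(b*q))" for j
    using y_pow_bound[OF y0 yX, of q j] q0 X0 K0 by (auto simp: mult.assoc intro!: mult_left_mono)
  have s2: "summable (\<lambda>j. K * X powr q * (real j + 1) powr (-(b*q)))" using s by (rule summable_mult)
  have sm: "summable (\<lambda>j. K * y j powr q)"
    by (rule summable_comparison_test'[OF s2, of 0]) (use le K0 in auto)
  have "(\<Sum>j. K * y j powr q) \<le> (\<Sum>j. K * X powr q * (real j + 1) powr (-(b*q)))"
    by (rule suminf_le[OF le sm s2])
  also have "\<dots> = K * X powr q * (\<Sum>j. (real j + 1) powr (-(b*q)))" using s by (rule suminf_mult)
  finally show ?thesis using sm by simp
qed


definition Kc :: "real \<Rightarrow> real \<Rightarrow> real \<Rightarrow> real" where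
  "Kc b p K = (\<Sum>j. (real j + 1) powr (-(2*b))) + K / (1 - p * b) + 2 powr (2*b - 1) / (2*b - 1)"

lemma cap_sum_i:
  fixes b p K X :: real and y :: "nat \<Rightarrow> real"
  assumes b1: "1 < b" and p0: "0 < p" and pb: "p * b < 1" and K0: "0 \<le> K" and X0: "0 \<le> X"
    and y0: "\<And>j. 0 \<le> y j" and yX: "\<And>j. y j \<le> X * (real j + 1) powr (-b)"
  shows "summable (\<lambda>j. min ((y j)\<^sup>2) (K * y j powr p))
     \<and> (\<Sum>j. min ((y j)\<^sup>2) (K * y j powr p)) \<le> Kc b p K * X powr (1/b)"
proof -
  define f where "f j = min ((y j)\<^sup>2) (K * y j powr p)" for j
  define Z2 where "Z2 = (\<Sum>j. (real j + 1) powr (-(2*b)))"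
  have s2: "summable (\<lambda>j. (real j + 1) powr (-(2*b)))" using b1 by (intro summable_shift_powr) simp
  have Z2n: "0 \<le> Z2" unfolding Z2_def using s2 by (intro suminf_nonneg) auto
  have ysq: "(y j)\<^sup>2 \<le> X\<^sup>2 * (real j + 1) powr (-(2*b))" for j
  proof -
    have "(y j)\<^sup>2 \<le> (X * (real j + 1) powr (-b))\<^sup>2" using y0[of j] yX[of j] by (intro power_mono) auto
    also have "\<dots> = X\<^sup>2 * (real j + 1) powr (-(2*b))"
      by (simp add: power_mult_distrib power2_eq_square powr_add[symmetric])
    finally show ?thesis .
  qed
  have f0: "0 \<le> f j" for j unfolding f_def using y0 K0 by simp
  have fsq: "f j \<le> X\<^sup>2 * (real j + 1) powr (-(2*b))" for j unfolding f_def using ysq[of j] by linarith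
  have sX: "summable (\<lambda>j. X\<^sup>2 * (real j + 1) powr (-(2*b)))" using s2 by (rule summable_mult)
  have sf: "summable f" by (rule summable_comparison_test'[OF sX, of 0]) (use f0 fsq in auto)
  have Kc_ge: "Z2 \<le> Kc b p K" "K / (1 - p * b) \<le> Kc b p K" "2 powr (2*b - 1) / (2*b - 1) \<le> Kc b p K"
    unfolding Kc_def Z2_def[symmetric] using Z2n K0 pb b1 by auto
  have bound: "(\<Sum>j. f j) \<le> Kc b p K * X powr (1/b)"
  proof (cases "X \<le> 1")
    case True
    have "(\<Sum>j. f j) \<le> (\<Sum>j. X\<^sup>2 * (real j + 1) powr (-(2*b)))" by (rule suminf_le[OF fsq sf sX])
    also have "\<dots> = X\<^sup>2 * Z2" unfolding Z2_def using s2 by (rule suminf_mult)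
    also have "X\<^sup>2 \<le> X powr (1/b)"
    proof (cases "X = 0")
      case True then show ?thesis by simp
    next
      case False
      then have "0 < X" using X0 by simp
      then have "X\<^sup>2 = X powr 2" by (simp add: powr_realpow)
      also have "\<dots> \<le> X powr (1/b)" using \<open>0 < X\<close> True b1 by (intro powr_mono'; auto simp: field_simps)
      finally show ?thesis .
    qed
    then have "X\<^sup>2 * Z2 \<le> X powr (1/b) * Z2" using Z2n by (rule mult_right_mono)
    also have "\<dots> \<le> Kc b p K * X powr (1/b)" using Kc_ge(1) by (simp add: mult.commute mult_right_mono)
    finally show ?thesis by simp
  next
    case False
    then have X1: "1 < X" by simp
    define R where "R = X powr (1/b)"
    define J where "J = nat \<lfloor>R\<rfloor>"
    have R1: "1 < R" unfolding R_def using X1 b1 by (intro gr_one_powr; simp)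
    have JR: "real J \<le> R" "R < real J + 1" unfolding J_def using R1 by linarith+
    have J1: "1 \<le> J" unfolding J_def using R1 by linarith
    have J2: "R / 2 \<le> real J" using JR J1 by linarith
    have split: "(\<Sum>j. f j) = (\<Sum>j. f (j + J)) + (\<Sum>j<J. f j)"
      by (rule suminf_split_initial_segment[OF sf])
    have low: "(\<Sum>j<J. f j) \<le> K / (1 - p * b) * X powr (1/b)"
    proof -
      have "(\<Sum>j<J. f j) \<le> (\<Sum>j<J. K * (X powr p * (real j + 1) powr (-(p*b))))"
      proof (intro sum_mono)
        fix j
        have "f j \<le> K * y j powr p" unfolding f_def by simp
        also have "\<dots> \<le> K * (X powr p * (real j + 1) powr (-(p*b)))"
          using y_pow_bound[OF y0 yX, of p j] p0 X0 K0 by (auto simp: mult_ac intro!: mult_left_mono)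
        finally show "f j \<le> K * (X powr p * (real j + 1) powr (-(p*b)))" .
      qed
      also have "\<dots> = K * X powr p * (\<Sum>j<J. (real j + 1) powr (-(p*b)))"
        by (simp add: sum_distrib_left mult_ac)
      also have "\<dots> \<le> K * X powr p * (real J powr (1 - p*b) / (1 - p*b))"
        using ps_low[of "p*b" J] p0 b1 pb K0 by (intro mult_left_mono) auto
      also have "\<dots> \<le> K * X powr p * (R powr (1 - p*b) / (1 - p*b))"
        using JR J1 pb K0 by (intro mult_left_mono divide_right_mono powr_mono2; auto)
      also have "R powr (1 - p*b) = X powr ((1 - p*b) / b)" unfolding R_def by (simp add: powr_powr)
      also have "K * X powr p * (X powr ((1 - p*b) / b) / (1 - p*b)) = K / (1 - p*b) * X powr (1/b)"
      proof -
        have "X powr p * X powr ((1 - p*b) / b) = X powr (1/b)"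
          using b1 by (simp add: powr_add[symmetric] field_simps)
        then show ?thesis by (simp add: field_simps)
      qed
      finally show ?thesis .
    qed
    have high: "(\<Sum>j. f (j + J)) \<le> 2 powr (2*b - 1) / (2*b - 1) * X powr (1/b)"
    proof -
      have s3: "summable (\<lambda>j. f (j + J))" using sf by (subst summable_iff_shift)
      have s4: "summable (\<lambda>j. (real (j + J) + 1) powr (-(2*b)))"
      proof -
        have "summable (\<lambda>j. (\<lambda>j. (real j + 1) powr (-(2*b))) (j + J))"
          using summable_iff_shift[of "\<lambda>j. (real j + 1) powr (-(2*b))" J] s2 by blast
        then show ?thesis by simp
      qed
      have "(\<Sum>j. f (j + J)) \<le> (\<Sum>j. X\<^sup>2 * (real (j + J) + 1) powr (-(2*b)))"
      proof (rule suminf_le[OF _ s3 summable_mult[OF s4]])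
        fix j show "f (j + J) \<le> X\<^sup>2 * (real (j + J) + 1) powr (-(2*b))" using fsq[of "j + J"] by simp
      qed
      also have "\<dots> = X\<^sup>2 * (\<Sum>j. (real (j + J) + 1) powr (-(2*b)))" using s4 by (rule suminf_mult)
      also have "\<dots> \<le> X\<^sup>2 * (real J powr (1 - 2*b) / (2*b - 1))"
        using ps_high[of "2*b" J] b1 J1 by (intro mult_left_mono) auto
      also have "\<dots> \<le> X\<^sup>2 * ((R / 2) powr (1 - 2*b) / (2*b - 1))"
        using J2 R1 b1 by (intro mult_left_mono divide_right_mono powr_mono2'; auto)
      also have "X\<^sup>2 * ((R / 2) powr (1 - 2*b) / (2*b - 1)) = 2 powr (2*b - 1) / (2*b - 1) * X powr (1/b)"
      proof -
        have a: "(R / 2) powr (1 - 2*b) = R powr (1 - 2*b) / 2 powr (1 - 2*b)" using R1 by (intro powr_divide; auto)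
        have b': "R powr (1 - 2*b) = X powr ((1 - 2*b) / b)" unfolding R_def by (simp add: powr_powr)
        have c: "1 / 2 powr (1 - 2*b) = 2 powr (2*b - 1)"
        proof -
          have "2 powr (2*b - 1) = 2 powr (-(1 - 2*b))" by simp
          also have "\<dots> = 1 / 2 powr (1 - 2*b)" by (rule powr_minus_divide)
          finally show ?thesis by simp
        qed
        have d: "X\<^sup>2 * X powr ((1 - 2*b) / b) = X powr (1/b)"
        proof -
          have "X\<^sup>2 = X powr 2" using X1 by (simp add: powr_realpow)
          then have "X\<^sup>2 * X powr ((1 - 2*b) / b) = X powr (2 + (1 - 2*b) / b)" by (simp add: powr_add)
          also have "2 + (1 - 2*b) / b = 1 / b" using b1 by (simp add: field_simps)
          finally show ?thesis .
        qed
        have "X\<^sup>2 * ((R / 2) powr (1 - 2*b) / (2*b - 1)) = (X\<^sup>2 * X powr ((1 - 2*b) / b)) * (1 / 2 powr (1 - 2*b)) / (2*b - 1)"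
          unfolding a b' by simp
        also have "\<dots> = 2 powr (2*b - 1) / (2*b - 1) * X powr (1/b)" unfolding c d by simp
        finally show ?thesis .
      qed
      finally show ?thesis .
    qed
    have "(\<Sum>j. f j) \<le> (2 powr (2*b - 1) / (2*b - 1) + K / (1 - p * b)) * X powr (1/b)"
      using split low high by (simp add: distrib_right)
    also have "\<dots> \<le> Kc b p K * X powr (1/b)"
      unfolding Kc_def using Z2n by (intro mult_right_mono) (auto simp: Z2_def)
    finally show ?thesis .
  qed
  show ?thesis using sf bound unfolding f_def by simp
qed

lemma sgd_iter_cong: "(\<And>k. k < n \<Longrightarrow> eta k = eta' k) \<Longrightarrow> sgd_iter eta phi z n = sgd_iter eta' phi z n"
  by (induction n) (auto simp: Let_def)

lemma var_triv:
  fixes N :: nat and eta0 g lam :: real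
  assumes N1: "1 \<le> N" and g: "0 \<le> g" and e0: "0 < eta0" and l0: "0 \<le> lam" and el: "eta0 * lam \<le> 1"
  shows "lam * (\<Sum>i<N. (sched eta0 g N i)\<^sup>2 * lam * Pr (sched eta0 g N) lam (Suc i) N) \<le> (lam * eta0 * real N)\<^sup>2 / real N"
proof -
  define e where "e = sched eta0 g N"
  have e_nn: "0 \<le> e k" for k unfolding e_def using e0 by (simp add: sched_nonneg)
  have e_le: "e k \<le> eta0" for k unfolding e_def using e0 g by (simp add: sched_le)
  have el1: "e k * lam \<le> 1" for k using mult_right_mono[OF e_le[of k] l0] el by simp
  have el0: "0 \<le> e k * lam" for k using e_nn l0 by simp
  have "(\<Sum>i<N. (e i)\<^sup>2 * lam * Pr e lam (Suc i) N) \<le> (\<Sum>i<N. eta0\<^sup>2 * lam)"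
  proof (intro sum_mono)
    fix i
    have P1: "Pr e lam (Suc i) N \<le> 1" by (rule Pr_le1[OF el1 el0])
    have P0: "0 \<le> Pr e lam (Suc i) N" by (rule Pr_nonneg[OF el1])
    have "(e i)\<^sup>2 \<le> eta0\<^sup>2" using e_nn[of i] e_le[of i] by (intro power_mono) auto
    then have "(e i)\<^sup>2 * lam * Pr e lam (Suc i) N \<le> eta0\<^sup>2 * lam * 1"
      using P0 P1 l0 by (intro mult_mono) auto
    then show "(e i)\<^sup>2 * lam * Pr e lam (Suc i) N \<le> eta0\<^sup>2 * lam" by simp
  qed
  also have "\<dots> = real N * eta0\<^sup>2 * lam" by simp
  finally have "(\<Sum>i<N. (e i)\<^sup>2 * lam * Pr e lam (Suc i) N) \<le> real N * eta0\<^sup>2 * lam" .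
  then have "lam * (\<Sum>i<N. (e i)\<^sup>2 * lam * Pr e lam (Suc i) N) \<le> lam * (real N * eta0\<^sup>2 * lam)"
    using l0 by (rule mult_left_mono)
  also have "\<dots> = (lam * eta0 * real N)\<^sup>2 / real N" using N1 by (simp add: power2_eq_square field_simps)
  finally show ?thesis unfolding e_def .
qed

context sgdloc begin

lemma risk_general:
  fixes N :: nat and g eta0 c0 :: real
  assumes N1: "1 \<le> N" and g: "0 < g" and e0: "0 < eta0" and ec: "eta0 \<le> c0" and c0l: "c0 * lam 0 \<le> 1"
    and C0: "0 \<le> C" and cT: "C * c0 * (\<Sum>j. lam j) \<le> 1/2" and lsum: "summable lam"
    and a_le: "(\<Sum>j. (a j)\<^sup>2) \<le> 1"
  shows "expected_risk mu phi f sig (sched eta0 g N) N \<le> ennreal (1/2) * (ennreal ((s / (eta0 * real N / 2 * (1/2) powr g)) powr s)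
     + 2 * ennreal (C * (\<Sum>j. lam j * (tt j)\<^sup>2) + sig\<^sup>2)
        * (\<Sum>j. ennreal (lam j * (\<Sum>i<N. (sched eta0 g N i)\<^sup>2 * lam j * Pr (sched eta0 g N) (lam j) (Suc i) N))))"
proof -
  define e where "e = sched eta0 g N"
  have e_nn: "0 \<le> e k" for k unfolding e_def using e0 by (simp add: sched_nonneg)
  have e_le: "e k \<le> c0" for k unfolding e_def using e0 g ec sched_le[of eta0 g N k] by simp
  have el1: "e k * lam j \<le> 1" for k j
  proof -
    have "e k * lam j \<le> c0 * lam 0" using e_nn[of k] e_le[of k] lam_nonneg[of j] lam_le0[of j] by (intro mult_mono) auto
    then show ?thesis using c0l by simp
  qed
  have rec: "DD e j (Suc k) \<le> ennreal (1 - e k * lam j) * DD e j k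
     + ennreal ((e k)\<^sup>2) * (ennreal C * ennreal (lam j) * (\<Sum>i. ennreal (lam i) * DD e i k))
     + ennreal ((e k)\<^sup>2 * sig\<^sup>2) * ennreal (lam j)" for j k
    by (rule DD_Suc[OF e_nn el1])
  have abs: "(\<Sum>j. ennreal (lam j) * DD e j N) \<le> (\<Sum>j. ennreal (lam j * Pr e (lam j) 0 N) * DD e j 0)
      + 2 * (ennreal C * (\<Sum>j. ennreal (lam j) * DD e j 0) + ennreal (sig\<^sup>2))
          * (\<Sum>j. ennreal (lam j * (\<Sum>i<N. (e i)\<^sup>2 * lam j * Pr e (lam j) (Suc i) N)))"
    by (rule sgd_abstract[where lam=lam and eta=e and DD="DD e" and C=C and sg=sig and N=N, OF lam_nonneg lsum e_nn e_le el1 C0 cT rec])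
  have Bsum: "(\<Sum>j. ennreal (lam j) * DD e j 0) = ennreal (\<Sum>j. lam j * (tt j)\<^sup>2)"
    unfolding DD_0 using B_summable lam_nonneg
    by (subst suminf_ennreal2[symmetric]) (auto simp: ennreal_mult)
  have K0eq: "ennreal C * ennreal (\<Sum>j. lam j * (tt j)\<^sup>2) + ennreal (sig\<^sup>2) = ennreal (C * (\<Sum>j. lam j * (tt j)\<^sup>2) + sig\<^sup>2)"
  proof -
    have "0 \<le> (\<Sum>j. lam j * (tt j)\<^sup>2)" using B_summable lam_nonneg by (intro suminf_nonneg) auto
    then have "ennreal (C * (\<Sum>j. lam j * (tt j)\<^sup>2) + sig\<^sup>2) = ennreal (C * (\<Sum>j. lam j * (tt j)\<^sup>2)) + ennreal (sig\<^sup>2)"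
      using C0 by (intro ennreal_plus) auto
    also have "ennreal (C * (\<Sum>j. lam j * (tt j)\<^sup>2)) = ennreal C * ennreal (\<Sum>j. lam j * (tt j)\<^sup>2)"
      using C0 \<open>0 \<le> (\<Sum>j. lam j * (tt j)\<^sup>2)\<close> by (intro ennreal_mult)
    finally show ?thesis by simp
  qed
  define Sm where "Sm = eta0 * real N / 2 * (1/2) powr g"
  have Smp: "0 < Sm" unfolding Sm_def using e0 N1 by simp
  have Ssum: "Sm \<le> (\<Sum>m<N. e m)"
  proof -
    have "(\<Sum>m<N. e m) = eta0 * (\<Sum>m\<in>{0..<N}. (1 - real m / real N) powr g)"
      unfolding e_def sched_def sum_distrib_left by (intro sum.cong) auto
    moreover have tl: "(\<Sum>m\<in>{0..<N}. (1 - real m / real N) powr g) \<ge> (real N / 2) * ((real N / 2) / real N) powr g"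
      using tail_lower[of 0 N g] g by simp
    moreover have h1: "(real N / 2) / real N = 1/2" using N1 by simp
    ultimately have "(real N / 2) * (1/2) powr g \<le> (\<Sum>m\<in>{0..<N}. (1 - real m / real N) powr g)"
      by (simp only: h1)
    then have "eta0 * ((real N / 2) * (1/2) powr g) \<le> eta0 * (\<Sum>m\<in>{0..<N}. (1 - real m / real N) powr g)"
      using e0 by (intro mult_left_mono) auto
    then show ?thesis unfolding Sm_def \<open>(\<Sum>m<N. e m) = _\<close> by (simp add: mult_ac)
  qed
  have bias: "(\<Sum>j. ennreal (lam j * Pr e (lam j) 0 N) * DD e j 0) \<le> ennreal ((s / Sm) powr s)"
  proof -
    have "(\<Sum>j. ennreal (lam j * Pr e (lam j) 0 N) * DD e j 0) \<le> (\<Sum>j. ennreal ((a j)\<^sup>2 * (s / Sm) powr s))"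
    proof (intro suminf_le allI)
      fix j
      have P0: "0 \<le> Pr e (lam j) 0 N" by (rule Pr_nonneg) (rule el1)
      have Pexp: "Pr e (lam j) 0 N \<le> exp (- lam j * Sm)"
      proof -
        have "Pr e (lam j) 0 N \<le> exp (- lam j * (\<Sum>m\<in>{0..<N}. e m))" by (rule Pr_exp) (rule el1)
        also have "\<dots> \<le> exp (- lam j * Sm)" using Ssum lam_nonneg[of j] by (simp add: atLeast0LessThan mult_left_mono)
        finally show ?thesis .
      qed
      have "lam j * Pr e (lam j) 0 N * (tt j)\<^sup>2 = (a j)\<^sup>2 * (lam j powr s * Pr e (lam j) 0 N)"
        using lam_tt_sq[of j] by (simp add: mult_ac)
      also have "\<dots> \<le> (a j)\<^sup>2 * (lam j powr s * exp (- lam j * Sm))"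
        using Pexp by (intro mult_left_mono) auto
      also have "\<dots> \<le> (a j)\<^sup>2 * (s / Sm) powr s"
        using bias_pt[OF lam_nonneg Smp s_pos, of j] by (intro mult_left_mono) auto
      finally show "ennreal (lam j * Pr e (lam j) 0 N) * DD e j 0 \<le> ennreal ((a j)\<^sup>2 * (s / Sm) powr s)"
        unfolding DD_0 using lam_nonneg[of j] P0 by (simp add: ennreal_mult[symmetric] ennreal_leI)
    qed auto
    also have "\<dots> = ennreal ((\<Sum>j. (a j)\<^sup>2) * (s / Sm) powr s)"
      using a_summ by (subst suminf_ennreal2) (auto intro: summable_mult2 simp: suminf_mult2)
    also have "\<dots> \<le> ennreal ((s / Sm) powr s)"
      using a_le a_summ by (intro ennreal_leI mult_left_le_one_le) (auto intro: suminf_nonneg)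
    finally show ?thesis .
  qed
  have "expected_risk mu phi f sig e N \<le> ennreal (1/2) * (\<Sum>j. ennreal (lam j) * DD e j N)"
    by (rule risk_DD)
  also have "\<dots> \<le> ennreal (1/2) * ((\<Sum>j. ennreal (lam j * Pr e (lam j) 0 N) * DD e j 0)
      + 2 * (ennreal C * (\<Sum>j. ennreal (lam j) * DD e j 0) + ennreal (sig\<^sup>2))
          * (\<Sum>j. ennreal (lam j * (\<Sum>i<N. (e i)\<^sup>2 * lam j * Pr e (lam j) (Suc i) N))))"
    by (intro mult_left_mono abs) simp
  also have "\<dots> \<le> ennreal (1/2) * (ennreal ((s / Sm) powr s)
      + 2 * ennreal (C * (\<Sum>j. lam j * (tt j)\<^sup>2) + sig\<^sup>2)
          * (\<Sum>j. ennreal (lam j * (\<Sum>i<N. (e i)\<^sup>2 * lam j * Pr e (lam j) (Suc i) N))))"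
    unfolding Bsum K0eq by (intro mult_left_mono add_mono bias order.refl) simp
  finally show ?thesis unfolding e_def Sm_def .
qed

end

lemma var_term:
  fixes N :: nat and eta0 g lam :: real
  assumes N1: "1 \<le> N" and g: "0 \<le> g" and e0: "0 < eta0" and l0: "0 \<le> lam" and el: "eta0 * lam \<le> 1"
  shows "lam * (\<Sum>i<N. (sched eta0 g N i)\<^sup>2 * lam * Pr (sched eta0 g N) lam (Suc i) N)
     \<le> min ((lam * eta0 * real N)\<^sup>2) (Kv g * (lam * eta0 * real N) powr (1/(g+1))) / real N"
  using var_triv[OF N1 g e0 l0 el] var_lam[OF N1 g e0 l0 el] N1 by (simp add: min_divide_distrib_right)

lemma var_case_i:
  fixes lam :: "nat \<Rightarrow> real" and N :: nat and eta0 g b c :: real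
  assumes l0: "\<And>j. 0 \<le> lam j" and cap: "\<And>j. lam j \<le> c * (real j + 1) powr (-b)" and c0: "0 \<le> c"
    and b1: "1 < b" and gb: "b - 1 < g" and N1: "1 \<le> N" and e0: "0 < eta0" and el: "\<And>j. eta0 * lam j \<le> 1"
  shows "(\<Sum>j. ennreal (lam j * (\<Sum>i<N. (sched eta0 g N i)\<^sup>2 * lam j * Pr (sched eta0 g N) (lam j) (Suc i) N)))
     \<le> ennreal (Kc b (1/(g+1)) (Kv g) * (c * eta0 * real N) powr (1/b) / real N)"
proof -
  define y where "y j = lam j * eta0 * real N" for j
  define X where "X = c * eta0 * real N"
  have g0: "0 \<le> g" using b1 gb by simp
  have RN: "0 < real N" using N1 by simp
  have Kv0: "0 \<le> Kv g" unfolding Kv_def by simp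
  have y0: "0 \<le> y j" for j unfolding y_def using l0[of j] e0 by simp
  have yX: "y j \<le> X * (real j + 1) powr (-b)" for j
    unfolding y_def X_def using mult_right_mono[OF cap[of j], of "eta0 * real N"] e0 by (simp add: mult_ac)
  have pb: "1/(g+1) * b < 1" using gb b1 by (simp add: field_simps)
  have cs: "summable (\<lambda>j. min ((y j)\<^sup>2) (Kv g * y j powr (1/(g+1))))
     \<and> (\<Sum>j. min ((y j)\<^sup>2) (Kv g * y j powr (1/(g+1)))) \<le> Kc b (1/(g+1)) (Kv g) * X powr (1/b)"
    by (rule cap_sum_i[OF b1 _ pb Kv0 _ y0 yX]) (use g0 c0 e0 in \<open>auto simp: X_def\<close>)
  have "(\<Sum>j. ennreal (lam j * (\<Sum>i<N. (sched eta0 g N i)\<^sup>2 * lam j * Pr (sched eta0 g N) (lam j) (Suc i) N)))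
      \<le> (\<Sum>j. ennreal (min ((y j)\<^sup>2) (Kv g * y j powr (1/(g+1))) / real N))"
    unfolding y_def by (intro suminf_le allI ennreal_leI var_term N1 g0 e0 l0 el) auto
  also have "\<dots> = ennreal ((\<Sum>j. min ((y j)\<^sup>2) (Kv g * y j powr (1/(g+1)))) / real N)"
    using cs y0 Kv0 by (subst suminf_ennreal2) (auto intro!: summable_divide simp: suminf_divide)
  also have "\<dots> \<le> ennreal (Kc b (1/(g+1)) (Kv g) * X powr (1/b) / real N)"
    using cs RN by (intro ennreal_leI divide_right_mono) auto
  finally show ?thesis unfolding X_def .
qed

lemma var_case_ii:
  fixes lam :: "nat \<Rightarrow> real" and N :: nat and eta0 g b c s :: real
  assumes l0: "\<And>j. 0 \<le> lam j" and cap: "\<And>j. lam j \<le> c * (real j + 1) powr (-b)" and c0: "0 \<le> c"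
    and s0: "0 < s" and sb: "s < 1 - 1/b" and b1: "1 < b" and gs: "s / (1 - s) < g"
    and N1: "1 \<le> N" and e0: "0 < eta0" and el: "\<And>j. eta0 * lam j \<le> 1"
  shows "(\<Sum>j. ennreal (lam j * (\<Sum>i<N. (sched eta0 g N i)\<^sup>2 * lam j * Pr (sched eta0 g N) (lam j) (Suc i) N)))
     \<le> ennreal (max 1 (Kv g) * (c * eta0 * real N) powr (1 - s) * (\<Sum>j. (real j + 1) powr (-(b * (1 - s)))) / real N)"
proof -
  define y where "y j = lam j * eta0 * real N" for j
  define X where "X = c * eta0 * real N"
  define M where "M = max 1 (Kv g)"
  have s1: "s < 1" using sb b1 by (smt (verit) divide_pos_pos)
  have g0: "0 \<le> g" using gs s0 s1 by (smt (verit) divide_pos_pos)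
  have RN: "0 < real N" using N1 by simp
  have M0: "0 \<le> M" unfolding M_def by simp
  have y0: "0 \<le> y j" for j unfolding y_def using l0[of j] e0 by simp
  have yX: "y j \<le> X * (real j + 1) powr (-b)" for j
    unfolding y_def X_def using mult_right_mono[OF cap[of j], of "eta0 * real N"] e0 by (simp add: mult_ac)
  have p_le: "1/(g+1) \<le> 1 - s"
  proof -
    have "s < g * (1 - s)" using gs s1 by (simp add: field_simps)
    then have "1 < (g + 1) * (1 - s)" by (simp add: algebra_simps)
    then show ?thesis using g0 by (simp add: field_simps)
  qed
  have qb: "1 < (1 - s) * b" using sb b1 by (simp add: field_simps)
  have mb: "min ((y j)\<^sup>2) (Kv g * y j powr (1/(g+1))) \<le> M * y j powr (1 - s)" for j
  proof (cases "y j \<le> 1")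
    case True
    have "(y j)\<^sup>2 \<le> y j powr (1 - s)"
    proof (cases "y j = 0")
      case True then show ?thesis by simp
    next
      case False
      then have yp: "0 < y j" using y0[of j] by simp
      then have "(y j)\<^sup>2 = y j powr 2" by (simp add: powr_realpow)
      also have "\<dots> \<le> y j powr (1 - s)" using yp True s0 by (intro powr_mono'; auto)
      finally show ?thesis .
    qed
    also have "\<dots> \<le> M * y j powr (1 - s)"
    proof -
      have "1 \<le> M" unfolding M_def by simp
      from mult_right_mono[OF this, of "y j powr (1 - s)"] show ?thesis by simp
    qed
    finally show ?thesis by simp
  next
    case False
    have "Kv g * y j powr (1/(g+1)) \<le> Kv g * y j powr (1 - s)"
      using False p_le by (intro mult_left_mono powr_mono) (auto simp: Kv_def)
    also have "\<dots> \<le> M * y j powr (1 - s)" unfolding M_def by (intro mult_right_mono) auto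
    finally show ?thesis by simp
  qed
  have cs: "summable (\<lambda>j. M * y j powr (1 - s)) \<and> (\<Sum>j. M * y j powr (1 - s)) \<le> M * X powr (1 - s) * (\<Sum>j. (real j + 1) powr (-(b * (1 - s))))"
    by (rule cap_sum_ii[OF _ qb M0 _ y0 yX]) (use s1 c0 e0 in \<open>auto simp: X_def\<close>)
  have "(\<Sum>j. ennreal (lam j * (\<Sum>i<N. (sched eta0 g N i)\<^sup>2 * lam j * Pr (sched eta0 g N) (lam j) (Suc i) N)))
      \<le> (\<Sum>j. ennreal (M * y j powr (1 - s) / real N))"
  proof (intro suminf_le allI ennreal_leI)
    fix j
    have "lam j * (\<Sum>i<N. (sched eta0 g N i)\<^sup>2 * lam j * Pr (sched eta0 g N) (lam j) (Suc i) N)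
        \<le> min ((y j)\<^sup>2) (Kv g * y j powr (1/(g+1))) / real N"
      unfolding y_def by (rule var_term[OF N1 g0 e0 l0 el])
    also have "\<dots> \<le> M * y j powr (1 - s) / real N" using mb[of j] RN by (intro divide_right_mono) auto
    finally show "lam j * (\<Sum>i<N. (sched eta0 g N i)\<^sup>2 * lam j * Pr (sched eta0 g N) (lam j) (Suc i) N) \<le> M * y j powr (1 - s) / real N" .
  qed auto
  also have "\<dots> = ennreal ((\<Sum>j. M * y j powr (1 - s)) / real N)"
    using cs M0 by (subst suminf_ennreal2) (auto intro!: summable_divide simp: suminf_divide)
  also have "\<dots> \<le> ennreal (M * X powr (1 - s) * (\<Sum>j. (real j + 1) powr (-(b * (1 - s)))) / real N)"
    using cs RN by (intro ennreal_leI divide_right_mono) auto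
  finally show ?thesis unfolding X_def M_def .
qed

lemma powr_scale_id:
  fixes x N q t :: real assumes x: "0 \<le> x" and N: "0 < N"
  shows "(x * N powr t) powr q / N = x powr q * N powr (t * q - 1)"
proof -
  have "(x * N powr t) powr q = x powr q * (N powr t) powr q" using x N by (intro powr_mult; simp)
  also have "(N powr t) powr q = N powr (t * q)" by (simp add: powr_powr)
  finally have "(x * N powr t) powr q / N = x powr q * (N powr (t * q) / N)" by simp
  also have "N powr (t * q) / N = N powr (t * q - 1)" using N by (simp add: powr_diff)
  finally show ?thesis .
qed

lemma eta_N_id:
  fixes N al :: real assumes N: "0 < N"
  shows "N powr (-al) * N = N powr (1 - al)"
  using N by (simp add: powr_diff powr_minus field_simps)

lemma bias_id:
  fixes N al c0 s g :: real assumes N: "0 < N" and c0: "0 < c0" and s: "0 < s"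
  shows "(s / (c0 * N powr (-al) * N / 2 * (1/2) powr g)) powr s = (2 * s / (c0 * (1/2) powr g)) powr s * N powr (-((1 - al) * s))"
proof -
  have e: "c0 * N powr (-al) * N / 2 * (1/2) powr g = (c0 * (1/2) powr g / 2) * N powr (1 - al)"
    using eta_N_id[OF N, of al] by (simp add: mult_ac)
  have m: "N powr (-(1 - al)) = 1 / N powr (1 - al)" by (rule powr_minus_divide)
  have p1: "0 < N powr (1 - al)" "0 < (1/2::real) powr g" using N by auto
  have eq: "s / (c0 * N powr (-al) * N / 2 * (1/2) powr g) = (2 * s / (c0 * (1/2) powr g)) * N powr (-(1 - al))"
    unfolding e m using c0 p1 by (simp add: field_simps)
  have "(s / (c0 * N powr (-al) * N / 2 * (1/2) powr g)) powr s = ((2 * s / (c0 * (1/2) powr g)) * N powr (-(1 - al))) powr s"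
    by (simp only: eq)
  also have "\<dots> = (2 * s / (c0 * (1/2) powr g)) powr s * (N powr (-(1 - al))) powr s"
    using c0 s p1 by (intro powr_mult; auto)
  also have "(N powr (-(1 - al))) powr s = N powr (-((1 - al) * s))" by (simp add: powr_powr algebra_simps)
  finally show ?thesis .
qed

lemma combine_bound:
  fixes b K0 w :: real and V :: ennreal
  assumes b: "0 \<le> b" and K0: "0 \<le> K0" and w: "0 \<le> w" and V: "V \<le> ennreal w"
  shows "ennreal (1/2) * (ennreal b + 2 * ennreal K0 * V) \<le> ennreal (1/2 * (b + 2 * K0 * w))"
proof -
  have "ennreal (1/2) * (ennreal b + 2 * ennreal K0 * V) \<le> ennreal (1/2) * (ennreal b + 2 * ennreal K0 * ennreal w)"
    by (intro mult_left_mono add_mono order.refl V) auto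
  also have "\<dots> = ennreal (1/2 * (b + 2 * K0 * w))"
  proof -
    have "ennreal (1/2 * (b + 2 * K0 * w)) = ennreal (1/2) * ennreal (b + 2 * K0 * w)"
      using b K0 w by (intro ennreal_mult) auto
    also have "ennreal (b + 2 * K0 * w) = ennreal b + ennreal (2 * K0 * w)"
      using b K0 w by (intro ennreal_plus) auto
    also have "ennreal (2 * K0 * w) = ennreal 2 * ennreal K0 * ennreal w"
      using K0 w by (simp add: ennreal_mult)
    finally show ?thesis by simp
  qed
  finally show ?thesis .
qed

theorem mainTheorem7:
  fixes mu :: "'x measure"
    and phi :: "'x \<Rightarrow> 'h::{real_inner, complete_space, second_countable_topology}"
    and lam :: "nat \<Rightarrow> real" and v :: "nat \<Rightarrow> 'h"
    and f :: "'x \<Rightarrow> real" and a :: "nat \<Rightarrow> real"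
    and sig beta s C c c0 gamma :: real
  assumes prob: "prob_space mu"
    and phi_meas: "phi \<in> borel_measurable mu"
    and kernel_int: "integrable mu (\<lambda>x. (norm (phi x))\<^sup>2)"
    and lam_nonneg: "\<And>j. lam j \<ge> 0"
    and lam_decr: "decseq lam"
    and v_orth: "\<And>i j. inner (v i) (v j) = (if i = j then 1 else 0)"
    and v_eig: "\<And>j u. (\<integral>x. inner (v j) (phi x) * inner u (phi x) \<partial>mu) = lam j * inner (v j) u"
    and spectral: "\<And>u. (\<lambda>j. lam j * (inner u (v j))\<^sup>2) sums (\<integral>x. (inner u (phi x))\<^sup>2 \<partial>mu)"
    and sigma_pos: "sig > 0"
    and f_meas: "f \<in> borel_measurable mu"
    and beta_gt: "beta > 1"
    and capacity: "\<And>j. lam j \<le> c * (real j + 1) powr (-beta)"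
    and s_pos: "s > 0"
    and a_summ: "summable (\<lambda>j. (a j)\<^sup>2)"
    and a_le: "(\<Sum>j. (a j)\<^sup>2) \<le> 1"
    and source: "(\<lambda>n. \<integral>\<^sup>+ x. ennreal ((f x - (\<Sum>j<n. a j * lam j powr (s/2) * eigfun lam v phi j x))\<^sup>2) \<partial>mu)
                   \<longlonglongrightarrow> 0"
    and hypercontr: "\<And>u w. (\<integral>\<^sup>+ x. ennreal ((inner u (phi x))\<^sup>2 * (inner w (phi x))\<^sup>2) \<partial>mu)
                      \<le> ennreal C * (\<integral>\<^sup>+ x. ennreal ((inner u (phi x))\<^sup>2) \<partial>mu)
                                    * (\<integral>\<^sup>+ x. ennreal ((inner w (phi x))\<^sup>2) \<partial>mu)"
    and c0_pos: "c0 > 0"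
    and c0_le: "c0 * lam 0 \<le> 1"
    and c0_lt: "2 * C * (\<Sum>j. lam j) * c0 < 1"
  shows "(s \<ge> 1 - 1/beta \<and> gamma > beta - 1 \<longrightarrow>
            (\<exists>K. \<forall>N::nat. N > 0 \<longrightarrow>
               expected_risk mu phi f sig
                 (\<lambda>k. c0 * real N powr (-((s*beta - beta + 1) / (s*beta + 1)))
                        * (1 - real k / real N) powr gamma) N
               \<le> ennreal (K * real N powr (-(s*beta / (s*beta + 1))))))
       \<and> (s < 1 - 1/beta \<and> gamma > s / (1 - s) \<longrightarrow>
            (\<exists>K. \<forall>N::nat. N > 0 \<longrightarrow>
               expected_risk mu phi f sig (\<lambda>k. c0 * (1 - real k / real N) powr gamma) N
               \<le> ennreal (K * real N powr (-s))))"
proof -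
  define C' where "C' = max C 0"
  have eC: "ennreal C = ennreal C'"
    unfolding C'_def by (cases "C \<le> 0") (auto simp: ennreal_neg max_def)
  have C'0: "0 \<le> C'" unfolding C'_def by simp
  have lam_le0: "lam j \<le> lam 0" for j using lam_decr by (simp add: decseq_def)
  interpret L: sgdloc mu phi lam v f a sig s C'
    by (rule sgdloc.intro[OF prob phi_meas kernel_int lam_nonneg lam_le0 v_orth v_eig spectral sigma_pos
        f_meas s_pos a_summ source hypercontr[unfolded eC]])
  have c_nn: "0 \<le> c" using capacity[of 0] lam_nonneg[of 0] by simp
  have lsum: "summable lam"
  proof (rule summable_comparison_test'[of "\<lambda>j. c * (real j + 1) powr (-beta)" 0])
    show "summable (\<lambda>j. c * (real j + 1) powr (-beta))" using beta_gt by (intro summable_mult summable_shift_powr)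
    show "norm (lam j) \<le> c * (real j + 1) powr (-beta)" for j using capacity[of j] lam_nonneg[of j] by simp
  qed
  have T0: "0 \<le> (\<Sum>j. lam j)" using lsum lam_nonneg by (intro suminf_nonneg) auto
  have cT: "C' * c0 * (\<Sum>j. lam j) \<le> 1/2"
  proof (cases "C \<le> 0")
    case True then show ?thesis unfolding C'_def by simp
  next
    case False then show ?thesis unfolding C'_def using c0_lt by (simp add: max_def mult_ac)
  qed
  define Bs where "Bs = (\<Sum>j. lam j * (L.tt j)\<^sup>2)"
  define K0 where "K0 = C' * Bs + sig\<^sup>2"
  have Bs0: "0 \<le> Bs" unfolding Bs_def using L.B_summable lam_nonneg by (intro suminf_nonneg) auto
  have K00: "0 \<le> K0" unfolding K0_def using C'0 Bs0 by simp
  have gen: "expected_risk mu phi f sig (\<lambda>k. eta0 * (1 - real k / real N) powr gamma) N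
      \<le> ennreal (1/2) * (ennreal ((s / (eta0 * real N / 2 * (1/2) powr gamma)) powr s)
          + 2 * ennreal K0 * (\<Sum>j. ennreal (lam j * (\<Sum>i<N. (sched eta0 gamma N i)\<^sup>2 * lam j * Pr (sched eta0 gamma N) (lam j) (Suc i) N))))"
    if N1: "1 \<le> N" and g: "0 < gamma" and e0: "0 < eta0" and ec: "eta0 \<le> c0" for N eta0
  proof -
    have eq: "expected_risk mu phi f sig (\<lambda>k. eta0 * (1 - real k / real N) powr gamma) N = expected_risk mu phi f sig (sched eta0 gamma N) N"
      unfolding expected_risk_def by (intro nn_integral_cong arg_cong[where f="excess_risk mu phi f"] sgd_iter_cong) (simp add: sched_def)
    show ?thesis unfolding eq K0_def Bs_def by (rule L.risk_general[OF N1 g e0 ec c0_le C'0 cT lsum a_le])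
  qed
  define B0 where "B0 = 2 * s / (c0 * (1/2) powr gamma)"
  have B00: "0 \<le> B0" unfolding B0_def using s_pos c0_pos by simp
  show ?thesis
  proof (intro conjI impI)
    assume h: "1 - 1/beta \<le> s \<and> beta - 1 < gamma"
    define al where "al = (s*beta - beta + 1) / (s*beta + 1)"
    define r where "r = s*beta / (s*beta + 1)"
    define p where "p = 1/(gamma+1)"
    have b0: "0 < beta" using beta_gt by simp
    have sb: "0 < s*beta + 1" using s_pos b0 by (simp add: add_pos_pos)
    have g: "0 < gamma" using h beta_gt by simp
    have al0: "0 \<le> al"
    proof -
      have "1 - 1/beta \<le> s" using h by simp
      then have "(1 - 1/beta) * beta \<le> s * beta" using b0 by (intro mult_right_mono) auto
      then have "0 \<le> s*beta - beta + 1" using b0 by (simp add: algebra_simps)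
      then show ?thesis unfolding al_def using sb by simp
    qed
    have r1: "(1 - al) * s = r" unfolding al_def r_def using sb by (simp add: field_simps)
    have r2: "(1 - al) * (1/beta) - 1 = - r" unfolding al_def r_def using sb b0 by (simp add: field_simps)
    define KK where "KK = Kc beta p (Kv gamma)"
    have pb: "p * beta < 1" unfolding p_def using h g by (simp add: field_simps)
    have KK0: "0 \<le> KK"
    proof -
      have "0 \<le> (\<Sum>j. (real j + 1) powr (-(2*beta)))"
        using summable_shift_powr[of "2*beta"] beta_gt by (intro suminf_nonneg) auto
      moreover have "0 \<le> Kv gamma / (1 - p * beta)" using pb by (simp add: Kv_def)
      moreover have "0 \<le> 2 powr (2*beta - 1) / (2*beta - 1)" using beta_gt by simp
      ultimately show ?thesis unfolding KK_def Kc_def by simp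
    qed
    show "\<exists>K. \<forall>N::nat. N > 0 \<longrightarrow>
               expected_risk mu phi f sig
                 (\<lambda>k. c0 * real N powr (-((s*beta - beta + 1) / (s*beta + 1)))
                        * (1 - real k / real N) powr gamma) N
               \<le> ennreal (K * real N powr (-(s*beta / (s*beta + 1))))"
    proof (intro exI[of _ "1/2 * (B0 powr s + 2 * K0 * (KK * (c * c0) powr (1/beta)))"] allI impI)
      fix N :: nat assume "0 < N"
      then have N1: "1 \<le> N" and RN: "0 < real N" by auto
      define eta0 where "eta0 = c0 * real N powr (-al)"
      have e0: "0 < eta0" unfolding eta0_def using c0_pos RN by simp
      have ec: "eta0 \<le> c0"
      proof -
        have "real N powr (-al) \<le> real N powr 0" using N1 al0 by (intro powr_mono) auto
        then have "real N powr (-al) \<le> 1" using RN by simp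
        then show ?thesis unfolding eta0_def using c0_pos by (simp add: mult_left_le)
      qed
      have el: "eta0 * lam j \<le> 1" for j
      proof -
        have "eta0 * lam j \<le> c0 * lam 0" using ec e0 lam_le0[of j] lam_nonneg[of j] by (intro mult_mono) auto
        then show ?thesis using c0_le by simp
      qed
      have G: "expected_risk mu phi f sig (\<lambda>k. eta0 * (1 - real k / real N) powr gamma) N
        \<le> ennreal (1/2) * (ennreal ((s / (eta0 * real N / 2 * (1/2) powr gamma)) powr s)
          + 2 * ennreal K0 * (\<Sum>j. ennreal (lam j * (\<Sum>i<N. (sched eta0 gamma N i)\<^sup>2 * lam j * Pr (sched eta0 gamma N) (lam j) (Suc i) N))))"
        by (rule gen[OF N1 g e0 ec])
      have V: "(\<Sum>j. ennreal (lam j * (\<Sum>i<N. (sched eta0 gamma N i)\<^sup>2 * lam j * Pr (sched eta0 gamma N) (lam j) (Suc i) N)))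
          \<le> ennreal (KK * (c * c0) powr (1/beta) * real N powr (-r))"
      proof -
        have v1: "(\<Sum>j. ennreal (lam j * (\<Sum>i<N. (sched eta0 gamma N i)\<^sup>2 * lam j * Pr (sched eta0 gamma N) (lam j) (Suc i) N)))
            \<le> ennreal (KK * (c * eta0 * real N) powr (1/beta) / real N)"
          unfolding KK_def p_def using h by (intro var_case_i[OF lam_nonneg capacity c_nn beta_gt _ N1 e0 el]) auto
        have "(c * eta0 * real N) powr (1/beta) / real N = (c * c0) powr (1/beta) * real N powr (-r)"
        proof -
          have ceq: "c * eta0 * real N = (c * c0) * real N powr (1 - al)"
            unfolding eta0_def using eta_N_id[OF RN, of al] by (simp add: mult_ac)
          have "(c * eta0 * real N) powr (1/beta) / real N = (c * c0) powr (1/beta) * real N powr ((1 - al) * (1/beta) - 1)"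
            unfolding ceq by (rule powr_scale_id) (use c_nn c0_pos RN in auto)
          then show ?thesis unfolding r2 .
        qed
        then have eq2: "KK * (c * eta0 * real N) powr (1/beta) / real N = KK * (c * c0) powr (1/beta) * real N powr (-r)"
          by (simp add: times_divide_eq_right[symmetric] mult.assoc del: times_divide_eq_right)
        show ?thesis using v1[unfolded eq2] .
      qed
      have bias: "(s / (eta0 * real N / 2 * (1/2) powr gamma)) powr s = B0 powr s * real N powr (-r)"
        unfolding eta0_def B0_def r1[symmetric] by (rule bias_id[OF RN c0_pos s_pos])
      have "expected_risk mu phi f sig (\<lambda>k. c0 * real N powr (-((s*beta - beta + 1) / (s*beta + 1))) * (1 - real k / real N) powr gamma) N
          = expected_risk mu phi f sig (\<lambda>k. eta0 * (1 - real k / real N) powr gamma) N"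
        unfolding eta0_def al_def ..
      also have "\<dots> \<le> ennreal (1/2 * (B0 powr s * real N powr (-r) + 2 * K0 * (KK * (c * c0) powr (1/beta) * real N powr (-r))))"
        using G unfolding bias
        by (rule order.trans, intro combine_bound V) (use B00 K00 KK0 c_nn c0_pos in auto)
      also have "\<dots> = ennreal (1/2 * (B0 powr s + 2 * K0 * (KK * (c * c0) powr (1/beta))) * real N powr (-r))"
        by (simp add: algebra_simps)
      finally show "expected_risk mu phi f sig (\<lambda>k. c0 * real N powr (-((s*beta - beta + 1) / (s*beta + 1))) * (1 - real k / real N) powr gamma) N
          \<le> ennreal (1/2 * (B0 powr s + 2 * K0 * (KK * (c * c0) powr (1/beta))) * real N powr (-(s*beta / (s*beta + 1))))"
        unfolding r_def .
    qed
  next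
    assume h: "s < 1 - 1/beta \<and> s / (1 - s) < gamma"
    have s1: "s < 1" using h beta_gt by (smt (verit) divide_pos_pos)
    have g: "0 < gamma" using h s_pos s1 by (smt (verit) divide_pos_pos)
    define Z where "Z = (\<Sum>j. (real j + 1) powr (-(beta * (1 - s))))"
    define M where "M = max 1 (Kv gamma)"
    have Z0: "0 \<le> Z"
    proof -
      have "1 < beta * (1 - s)" using h beta_gt by (simp add: field_simps)
      then show ?thesis unfolding Z_def using summable_shift_powr[of "beta * (1 - s)"] by (intro suminf_nonneg) auto
    qed
    have M0: "0 \<le> M" unfolding M_def by simp
    show "\<exists>K. \<forall>N::nat. N > 0 \<longrightarrow>
               expected_risk mu phi f sig (\<lambda>k. c0 * (1 - real k / real N) powr gamma) N
               \<le> ennreal (K * real N powr (-s))"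
    proof (intro exI[of _ "1/2 * (B0 powr s + 2 * K0 * (M * (c * c0) powr (1 - s) * Z))"] allI impI)
      fix N :: nat assume "0 < N"
      then have N1: "1 \<le> N" and RN: "0 < real N" by auto
      have el: "c0 * lam j \<le> 1" for j
      proof -
        have "c0 * lam j \<le> c0 * lam 0" using lam_le0[of j] c0_pos by (intro mult_left_mono) auto
        then show ?thesis using c0_le by simp
      qed
      have G: "expected_risk mu phi f sig (\<lambda>k. c0 * (1 - real k / real N) powr gamma) N
        \<le> ennreal (1/2) * (ennreal ((s / (c0 * real N / 2 * (1/2) powr gamma)) powr s)
          + 2 * ennreal K0 * (\<Sum>j. ennreal (lam j * (\<Sum>i<N. (sched c0 gamma N i)\<^sup>2 * lam j * Pr (sched c0 gamma N) (lam j) (Suc i) N))))"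
        by (rule gen[OF N1 g c0_pos order.refl])
      have V: "(\<Sum>j. ennreal (lam j * (\<Sum>i<N. (sched c0 gamma N i)\<^sup>2 * lam j * Pr (sched c0 gamma N) (lam j) (Suc i) N)))
          \<le> ennreal (M * (c * c0) powr (1 - s) * Z * real N powr (-s))"
      proof -
        have "(\<Sum>j. ennreal (lam j * (\<Sum>i<N. (sched c0 gamma N i)\<^sup>2 * lam j * Pr (sched c0 gamma N) (lam j) (Suc i) N)))
            \<le> ennreal (M * (c * c0 * real N) powr (1 - s) * Z / real N)"
          unfolding M_def Z_def using h by (intro var_case_ii[OF lam_nonneg capacity c_nn s_pos _ beta_gt _ N1 c0_pos el]) auto
        also have "M * (c * c0 * real N) powr (1 - s) * Z / real N = M * Z * ((c * c0 * real N powr 1) powr (1 - s) / real N)"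
          using RN by simp
        also have "(c * c0 * real N powr 1) powr (1 - s) / real N = (c * c0) powr (1 - s) * real N powr (-s)"
          using powr_scale_id[of "c * c0" "real N" 1 "1 - s"] c_nn c0_pos RN by simp
        finally show ?thesis by (simp add: mult_ac)
      qed
      have bias: "(s / (c0 * real N / 2 * (1/2) powr gamma)) powr s = B0 powr s * real N powr (-s)"
        unfolding B0_def using bias_id[OF RN c0_pos s_pos, of 0 gamma] RN by simp
      have "expected_risk mu phi f sig (\<lambda>k. c0 * (1 - real k / real N) powr gamma) N
          \<le> ennreal (1/2 * (B0 powr s * real N powr (-s) + 2 * K0 * (M * (c * c0) powr (1 - s) * Z * real N powr (-s))))"
        using G unfolding bias
        by (rule order.trans, intro combine_bound V) (use B00 K00 M0 Z0 c_nn c0_pos in auto)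
      also have "\<dots> = ennreal (1/2 * (B0 powr s + 2 * K0 * (M * (c * c0) powr (1 - s) * Z)) * real N powr (-s))"
        by (simp add: algebra_simps)
      finally show "expected_risk mu phi f sig (\<lambda>k. c0 * (1 - real k / real N) powr gamma) N
          \<le> ennreal (1/2 * (B0 powr s + 2 * K0 * (M * (c * c0) powr (1 - s) * Z)) * real N powr (-s))" .
    qed
  qed
qed

end
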